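(* Let $p\in(1,2]$ and let $H:\mathbb{R}^d\to\mathbb{R}^d$ be non-expansive in the Euclidean norm, i.e. $\|H(x)-H(y)\|\le\|x-y\|$ for all $x,y$. Assume the set $\mathcal X=\{x: H(x)=x\}$ of fixed points is nonempty and bounded. Consider $x_{k+1}=x_k+\alpha_k(H(x_k)-x_k+w_k)$ with $\mathcal F_k=\sigma(x_0,\dots,x_k)$, and suppose that $\mathbb{E}[w_k\mid\mathcal F_k]=0$ a.s. and that there exist a point $\bar x\in\mathcal X$ and constants $A>0$, $B\ge0$ with $\mathbb{E}[\|w_k\|^p\mid\mathcal F_k]\le A+B\|x_k-\bar x\|^p$ a.s. for all $k$. If $(\alpha_k)$ is a positive decreasing sequence with $\sum_k\alpha_k=\infty$ and $\sum_k\alpha_k^p<\infty$, then $x_k$ converges almost surely to a (possibly random) point of $\mathcal X$.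
   Context: $\|\cdot\|$ is the Euclidean norm; $x_0$ is an initial point and $w_k$ are integrable random noise vectors. *)

theory Defs
  imports "HOL-Probability.Probability"
begin

definition nat_filtration ::
  "'a measure \<Rightarrow> (nat \<Rightarrow> 'a \<Rightarrow> 'b::topological_space) \<Rightarrow> nat \<Rightarrow> 'a measure" where
  "nat_filtration M x k =
     sigma (space M) (\<Union>i\<in>{..k}. {x i -` A \<inter> space M | A. A \<in> sets borel})"

end

theory Submission
  imports Defs
begin


lemma norm_comb_sq:
  fixes a b :: "'v::real_inner"
  shows "(norm ((1-t) *\<^sub>R a + t *\<^sub>R b))\<^sup>2 = (1-t)*(norm a)\<^sup>2 + t*(norm b)\<^sup>2 - t*(1-t)*(norm (a-b))\<^sup>2"
  by (simp add: power2_norm_eq_inner inner_add_left inner_add_right inner_diff_left inner_diff_right inner_commute algebra_simps)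

lemma step_ineq:
  fixes x Hx z W :: "'v::real_inner"
  assumes Hne: "norm (Hx - z) \<le> norm (x - z)" and a: "0 < a" and L: "1 + 2*a \<le> L"
    and p: "1 < p" "p \<le> 2"
  shows "1 + (norm (x + a *\<^sub>R (Hx - x) + W - z))\<^sup>2 \<le> (1 + (norm (x - z))\<^sup>2) *
     (1 - a*(1-a)*(norm (x - Hx))\<^sup>2/(1 + (norm (x - z))\<^sup>2)
      + 2 * (inner (x + a *\<^sub>R (Hx - x) - z) (if norm W \<le> sqrt (1 + (norm (x - z))\<^sup>2) then W else 0) / (1 + (norm (x - z))\<^sup>2))
      + (2*L+3) * (norm W / sqrt (1 + (norm (x - z))\<^sup>2)) powr p
      + ((norm W / sqrt (1 + (norm (x - z))\<^sup>2)) powr p)\<^sup>2)"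
proof -
  define s where "s = norm (x - z)"
  define q where "q = 1 + s\<^sup>2"
  define \<rho> where "\<rho> = sqrt q"
  define y where "y = x + a *\<^sub>R (Hx - x)"
  define e where "e = (if norm W \<le> \<rho> then W else 0)"
  define hh where "hh = (if norm W \<le> \<rho> then 0 else W)"
  define \<theta> where "\<theta> = (norm W / \<rho>) powr p"
  define d where "d = inner (y - z) e / q"
  define r where "r = norm (x - Hx)"
  define v where "v = norm e / \<rho>"
  define u where "u = norm hh / \<rho>"
  have s0: "s \<ge> 0" by (simp add: s_def)
  have q1: "q \<ge> 1" by (simp add: q_def)
  have qpos: "q > 0" using q1 by simp
  have rho1: "\<rho> \<ge> 1" using q1 by (simp add: \<rho>_def)
  have rhopos: "\<rho> > 0" using rho1 by simp
  have rhosq: "\<rho>\<^sup>2 = q" using qpos by (simp add: \<rho>_def)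
  have srho: "s \<le> \<rho>" unfolding \<rho>_def q_def by (rule real_le_rsqrt) simp
  have Weq: "W = e + hh" by (simp add: e_def hh_def)
  have yz: "y - z = (1-a) *\<^sub>R (x - z) + a *\<^sub>R (Hx - z)"
    by (simp add: y_def algebra_simps)
  have n1: "(norm (y - z))\<^sup>2 \<le> s\<^sup>2 - a*(1-a)*r\<^sup>2"
  proof -
    have "(norm (y - z))\<^sup>2 = (1-a) * s\<^sup>2 + a*(norm (Hx - z))\<^sup>2 - a*(1-a)*(norm ((x - z) - (Hx - z)))\<^sup>2"
      unfolding yz s_def by (rule norm_comb_sq)
    also have "(x - z) - (Hx - z) = x - Hx" by simp
    also have "a*(norm (Hx - z))\<^sup>2 \<le> a * s\<^sup>2"
      using Hne a by (intro mult_left_mono power_mono) (auto simp: s_def)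
    finally show ?thesis by (simp add: r_def algebra_simps)
  qed
  have n2: "norm (y - z) \<le> L * s"
  proof -
    have "norm (y - z) \<le> norm ((1-a) *\<^sub>R (x - z)) + norm (a *\<^sub>R (Hx - z))"
      unfolding yz by (rule norm_triangle_ineq)
    also have "\<dots> = \<bar>1-a\<bar> * s + a * norm (Hx - z)" using a by (simp add: s_def)
    also have "\<dots> \<le> \<bar>1-a\<bar> * s + a * s" using Hne a by (simp add: s_def)
    also have "\<dots> \<le> (1 + 2*a) * s"
    proof -
      have "\<bar>1-a\<bar> + a \<le> 1+2*a" using a by linarith
      from mult_right_mono[OF this s0] show ?thesis by (simp add: algebra_simps)
    qed
    also have "\<dots> \<le> L * s" using L s0 by (intro mult_right_mono) auto
    finally show ?thesis .
  qed
  have v0: "v \<ge> 0" and u0: "u \<ge> 0" using rhopos by (auto simp: v_def u_def)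
  have v1: "v \<le> 1" using rhopos by (auto simp: v_def e_def)
  have th0: "\<theta> \<ge> 0" by (simp add: \<theta>_def)
  have vth: "v\<^sup>2 \<le> \<theta>"
  proof (cases "norm W \<le> \<rho>")
    case True
    then have vv: "v = norm W / \<rho>" by (simp add: v_def e_def)
    show ?thesis
    proof (cases "v = 0")
      case True then show ?thesis using th0 by simp
    next
      case False
      then have "v > 0" using v0 by simp
      then have "v powr 2 \<le> v powr p" using v1 p by (intro powr_mono') auto
      then show ?thesis using \<open>v > 0\<close> by (simp add: \<theta>_def vv powr_numeral)
    qed
  next
    case False then show ?thesis using th0 by (simp add: v_def e_def)
  qed
  have uth: "u \<le> \<theta>"
  proof (cases "norm W \<le> \<rho>")
    case True then show ?thesis using th0 by (simp add: u_def hh_def)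
  next
    case False
    then have uu: "u = norm W / \<rho>" and ug: "u > 1" using rhopos by (auto simp: u_def hh_def)
    have "u powr 1 \<le> u powr p" using ug p by (intro powr_mono) auto
    then show ?thesis using ug rhopos by (simp add: \<theta>_def uu)
  qed
  have uth2: "u\<^sup>2 \<le> \<theta>\<^sup>2" using uth u0 by (intro power_mono) auto
  have ne: "norm e = \<rho> * v" and nh: "norm hh = \<rho> * u" using rhopos by (auto simp: v_def u_def)
  have qd: "inner (y - z) e = q * d" using qpos by (simp add: d_def)
  have A1: "(norm (y - z + e))\<^sup>2 = (norm (y - z))\<^sup>2 + 2 * (q * d) + q * v\<^sup>2"
  proof -
    have "(norm (y - z + e))\<^sup>2 = (norm (y - z))\<^sup>2 + 2 * inner (y - z) e + (norm e)\<^sup>2"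
      by (simp add: power2_norm_eq_inner inner_add_left inner_add_right inner_commute)
    also have "(norm e)\<^sup>2 = q * v\<^sup>2" using rhosq by (simp add: ne power_mult_distrib)
    finally show ?thesis by (simp add: qd)
  qed
  have A2: "norm (y - z + e) \<le> \<rho> * (L + v)"
  proof -
    have "norm (y - z + e) \<le> norm (y - z) + norm e" by (rule norm_triangle_ineq)
    also have "\<dots> \<le> L * \<rho> + \<rho> * v" using n2 srho L a s0 ne
      by (smt (verit) mult_left_mono)
    finally show ?thesis by (simp add: algebra_simps)
  qed
  have A3: "norm (y + W - z) \<le> norm (y - z + e) + \<rho> * u"
  proof -
    have "y + W - z = (y - z + e) + hh" using Weq by (simp add: algebra_simps)
    then show ?thesis using norm_triangle_ineq[of "y - z + e" hh] nh by metis
  qed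
  have "(norm (y + W - z))\<^sup>2 \<le> (norm (y - z + e) + \<rho> * u)\<^sup>2"
    using A3 by (intro power_mono) auto
  also have "\<dots> = (norm (y - z + e))\<^sup>2 + 2 * norm (y - z + e) * (\<rho> * u) + \<rho>\<^sup>2 * u\<^sup>2"
    by (simp add: power2_sum power_mult_distrib)
  also have "\<dots> \<le> (norm (y - z + e))\<^sup>2 + 2 * (\<rho> * (L + v)) * (\<rho> * u) + \<rho>\<^sup>2 * u\<^sup>2"
    using A2 u0 rhopos by (intro add_mono mult_right_mono mult_left_mono) auto
  also have "\<dots> = (norm (y - z))\<^sup>2 + q * (2*d + v\<^sup>2 + 2*(L+v)*u + u\<^sup>2)"
    unfolding A1 rhosq[symmetric] by (simp add: algebra_simps power2_eq_square)
  also have "\<dots> \<le> s\<^sup>2 - a*(1-a)*r\<^sup>2 + q * (2*d + \<theta> + 2*(L+1)*\<theta> + \<theta>\<^sup>2)"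
  proof -
    have L0: "L + v \<ge> 0" using L a v0 by linarith
    have "2*(L+v)*u \<le> 2*(L+1)*\<theta>" using L0 v1 uth u0 L a
      by (intro mult_mono mult_left_mono) auto
    then have "2*d + v\<^sup>2 + 2*(L+v)*u + u\<^sup>2 \<le> 2*d + \<theta> + 2*(L+1)*\<theta> + \<theta>\<^sup>2"
      using vth uth2 by linarith
    then have "q * (2*d + v\<^sup>2 + 2*(L+v)*u + u\<^sup>2) \<le> q * (2*d + \<theta> + 2*(L+1)*\<theta> + \<theta>\<^sup>2)"
      using qpos by (intro mult_left_mono) auto
    then show ?thesis using n1 by linarith
  qed
  finally have main: "(norm (y + W - z))\<^sup>2 \<le> s\<^sup>2 - a*(1-a)*r\<^sup>2 + q * (2*d + \<theta> + 2*(L+1)*\<theta> + \<theta>\<^sup>2)" .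
  have "1 + (norm (y + W - z))\<^sup>2 \<le> q * (1 - a*(1-a)*r\<^sup>2/q + 2*d + (2*L+3)*\<theta> + \<theta>\<^sup>2)"
  proof -
    have eq: "q * (1 - a*(1-a)*r\<^sup>2/q + 2*d + (2*L+3)*\<theta> + \<theta>\<^sup>2)
        = q - a*(1-a)*r\<^sup>2 + q * (2*d + \<theta> + 2*(L+1)*\<theta> + \<theta>\<^sup>2)"
      using qpos by (simp add: field_simps)
    show ?thesis unfolding eq using main by (simp add: q_def)
  qed
  then show ?thesis
    by (simp add: s_def q_def \<rho>_def y_def e_def \<theta>_def d_def r_def)
qed




lemma pathwise:
  fixes xs Ws :: "nat \<Rightarrow> 'v::real_inner" and H :: "'v \<Rightarrow> 'v" and z :: 'v
    and \<alpha> :: "nat \<Rightarrow> real" and p L :: real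
  assumes Hne: "\<And>k. norm (H (xs k) - z) \<le> norm (xs k - z)"
    and apos: "\<And>k. 0 < \<alpha> k" and L: "\<And>k. 1 + 2 * \<alpha> k \<le> L"
    and a0: "\<alpha> \<longlonglongrightarrow> 0" and p: "1 < p" "p \<le> 2"
    and step: "\<And>k. xs (Suc k) = xs k + \<alpha> k *\<^sub>R (H (xs k) - xs k) + Ws k"
    and thsum: "summable (\<lambda>k. (norm (Ws k) / sqrt (1 + (norm (xs k - z))\<^sup>2)) powr p)"
    and dconv: "convergent (\<lambda>n. \<Sum>k<n. inner (xs k + \<alpha> k *\<^sub>R (H (xs k) - xs k) - z)
          (if norm (Ws k) \<le> sqrt (1 + (norm (xs k - z))\<^sup>2) then Ws k else 0) / (1 + (norm (xs k - z))\<^sup>2))"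
  shows "convergent (\<lambda>k. norm (xs k - z))"
    and "summable (\<lambda>k. \<alpha> k * (norm (xs k - H (xs k)))\<^sup>2)"
proof -
  define q where "q k = 1 + (norm (xs k - z))\<^sup>2" for k
  define \<theta> where "\<theta> k = (norm (Ws k) / sqrt (1 + (norm (xs k - z))\<^sup>2)) powr p" for k
  define d where "d k = inner (xs k + \<alpha> k *\<^sub>R (H (xs k) - xs k) - z)
          (if norm (Ws k) \<le> sqrt (1 + (norm (xs k - z))\<^sup>2) then Ws k else 0) / (1 + (norm (xs k - z))\<^sup>2)" for k
  define D where "D k = \<alpha> k * (1 - \<alpha> k) * (norm (xs k - H (xs k)))\<^sup>2 / q k" for k
  define c where "c k = (2*L+3) * \<theta> k + (\<theta> k)\<^sup>2" for k
  have q1: "q k \<ge> 1" for k by (simp add: q_def)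
  have qstep: "q (Suc k) \<le> q k * (1 - D k + 2 * d k + c k)" for k
    using step_ineq[OF Hne[of k] apos[of k] L[of k] p, where W="Ws k"] unfolding step[of k] q_def D_def d_def c_def \<theta>_def
    by (simp add: algebra_simps)
  define lq where "lq k = ln (q k)" for k
  have l0: "lq k \<ge> 0" for k using q1[of k] by (simp add: lq_def)
  have lstep: "lq (Suc k) \<le> lq k - D k + (2 * d k + c k)" for k
  proof -
    define t where "t = 1 - D k + 2 * d k + c k"
    have qk: "q k > 0" using q1[of k] by simp
    have "q k * t > 0" using qstep[of k] q1[of "Suc k"] by (simp add: t_def)
    then have t0: "t > 0" using qk by (simp add: zero_less_mult_iff)
    have "lq (Suc k) \<le> ln (q k * t)" unfolding lq_def
      using qstep[of k] q1[of "Suc k"] by (subst ln_le_cancel_iff) (auto simp: t_def)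
    also have "\<dots> = lq k + ln t" using qk t0 by (simp add: lq_def ln_mult)
    also have "\<dots> \<le> lq k + (t - 1)" using ln_le_minus_one[OF t0] by simp
    finally show ?thesis by (simp add: t_def)
  qed
  have th0: "\<theta> k \<ge> 0" for k by (simp add: \<theta>_def)
  have thsum': "summable \<theta>" using thsum by (simp add: \<theta>_def[abs_def])
  have "\<theta> \<longlonglongrightarrow> 0" by (rule summable_LIMSEQ_zero[OF thsum'])
  then have "eventually (\<lambda>k. \<theta> k < 1) sequentially"
    by (rule order_tendstoD) simp
  then have "eventually (\<lambda>k. norm ((\<theta> k)\<^sup>2) \<le> \<theta> k) sequentially"
  proof (rule eventually_mono)
    fix k assume "\<theta> k < 1"
    then have "\<theta> k * \<theta> k \<le> 1 * \<theta> k" using th0[of k] by (intro mult_right_mono) auto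
    then show "norm ((\<theta> k)\<^sup>2) \<le> \<theta> k" by (simp add: power2_eq_square)
  qed
  then have sq: "summable (\<lambda>k. (\<theta> k)\<^sup>2)" using thsum' by (rule summable_comparison_test_ev)
  have csum: "summable c" unfolding c_def[abs_def]
    by (rule summable_add[OF summable_mult[OF thsum'] sq])
  define \<Phi> where "\<Phi> n = (\<Sum>k<n. 2 * d k + c k)" for n
  have Phiconv: "convergent \<Phi>"
  proof -
    have "convergent (\<lambda>n. 2 * (\<Sum>k<n. d k) + (\<Sum>k<n. c k))"
      apply (intro convergent_add convergent_mult_const_iff[THEN iffD2])
      using dconv csum by (auto simp: d_def[abs_def] summable_iff_convergent)
    then show ?thesis by (simp add: \<Phi>_def[abs_def] sum.distrib sum_distrib_left)
  qed
  obtain BP where BP: "\<And>n. \<bar>\<Phi> n\<bar> \<le> BP"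
    using convergent_imp_Bseq[OF Phiconv] by (auto simp: Bseq_def)
  have "eventually (\<lambda>k. \<alpha> k < 1/2) sequentially" using a0 by (rule order_tendstoD) simp
  then obtain K where K: "\<And>k. k \<ge> K \<Longrightarrow> \<alpha> k < 1/2" by (auto simp: eventually_sequentially)
  have D0: "k \<ge> K \<Longrightarrow> D k \<ge> 0" for k
    using K[of k] apos[of k] q1[of k] by (simp add: D_def)
  define b where "b n = lq n - \<Phi> n" for n
  have bstep: "b (Suc n) \<le> b n - D n" for n
    using lstep[of n] by (simp add: b_def \<Phi>_def)
  have blow: "b n \<ge> - BP" for n using l0[of n] BP[of n] by (simp add: b_def)
  have bdec: "K \<le> m \<Longrightarrow> m \<le> n \<Longrightarrow> b n \<le> b m" for m n
  proof (induction n)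
    case 0 then show ?case by simp
  next
    case (Suc n)
    show ?case
    proof (cases "m \<le> n")
      case True
      then have "b n \<le> b m" using Suc by simp
      moreover have "D n \<ge> 0" using D0[of n] True Suc.prems by simp
      ultimately show ?thesis using bstep[of n] by simp
    next
      case False then have "m = Suc n" using Suc.prems by simp
      then show ?thesis by simp
    qed
  qed
  have bconv: "convergent b"
  proof (rule Bseq_monoseq_convergent'_dec[where M=K])
    show "Bseq (\<lambda>n. b (n + K))"
    proof (rule BseqI')
      fix n
      have "b (n + K) \<le> b K" using bdec[of K "n+K"] by simp
      then show "norm (b (n + K)) \<le> max \<bar>b K\<bar> BP" using blow[of "n+K"] by simp
    qed
  qed (use bdec in auto)
  have Dpart: "(\<Sum>k<n. D (k + K)) \<le> b K - b (n + K)" for n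
  proof (induction n)
    case 0 then show ?case by simp
  next
    case (Suc n) then show ?case using bstep[of "n + K"] by simp
  qed
  have Dsum: "summable D"
  proof -
    have "summable (\<lambda>k. D (k + K))"
    proof (rule summableI_nonneg_bounded)
      show "0 \<le> D (n + K)" for n using D0 by simp
      show "(\<Sum>k<n. D (k + K)) \<le> b K + BP" for n using Dpart[of n] blow[of "n+K"] by simp
    qed
    then show ?thesis by simp
  qed
  have lconv: "convergent lq"
  proof -
    have "convergent (\<lambda>n. b n + \<Phi> n)" using bconv Phiconv by (rule convergent_add)
    then show ?thesis by (simp add: b_def)
  qed
  then obtain l where l: "lq \<longlonglongrightarrow> l" by (auto simp: convergent_def)
  have qeq: "q k = exp (lq k)" for k using q1[of k] by (simp add: lq_def)
  have qlim: "q \<longlonglongrightarrow> exp l" unfolding qeq by (intro tendsto_exp l)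
  have "(\<lambda>k. sqrt (q k - 1)) \<longlonglongrightarrow> sqrt (exp l - 1)"
    by (intro tendsto_real_sqrt tendsto_diff qlim tendsto_const)
  moreover have "sqrt (q k - 1) = norm (xs k - z)" for k by (simp add: q_def)
  ultimately show "convergent (\<lambda>k. norm (xs k - z))" by (auto simp: convergent_def)
  obtain Q where Q: "\<And>k. norm (q k) \<le> Q" using convergent_imp_Bseq[of q] qlim
    by (auto simp: Bseq_def convergent_def)
  show "summable (\<lambda>k. \<alpha> k * (norm (xs k - H (xs k)))\<^sup>2)"
  proof (rule summable_comparison_test_ev)
    show "summable (\<lambda>k. 2 * Q * D k)" by (rule summable_mult[OF Dsum])
    show "eventually (\<lambda>k. norm (\<alpha> k * (norm (xs k - H (xs k)))\<^sup>2) \<le> 2 * Q * D k) sequentially"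
      unfolding eventually_sequentially
    proof (intro exI allI impI)
      fix k assume k: "K \<le> k"
      have qk: "q k > 0" using q1[of k] by simp
      have "\<alpha> k * (norm (xs k - H (xs k)))\<^sup>2 \<le> 2 * (1 - \<alpha> k) * (\<alpha> k * (norm (xs k - H (xs k)))\<^sup>2)"
        using mult_right_mono[of 1 "2 * (1 - \<alpha> k)" "\<alpha> k * (norm (xs k - H (xs k)))\<^sup>2"] K[OF k] apos[of k]
        by simp
      also have "\<dots> = 2 * q k * D k" using qk by (simp add: D_def)
      also have "\<dots> \<le> 2 * Q * D k" using Q[of k] D0[OF k] by (intro mult_right_mono) auto
      finally show "norm (\<alpha> k * (norm (xs k - H (xs k)))\<^sup>2) \<le> 2 * Q * D k"
        using apos[of k] by simp
    qed
  qed
qed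




lemma abs_le_one_plus_sq: "\<bar>t::real\<bar> \<le> 1 + t\<^sup>2"
proof (cases "\<bar>t\<bar> \<le> 1")
  case True then show ?thesis by (smt (verit) zero_le_power2)
next
  case False
  then have "\<bar>t\<bar> * 1 \<le> \<bar>t\<bar> * \<bar>t\<bar>" by (intro mult_left_mono) auto
  then show ?thesis by (simp add: power2_eq_square abs_mult_self_eq)
qed

lemma sq_integrable_imp_integrable:
  fixes f :: "'a \<Rightarrow> real"
  assumes "finite_measure M" "f \<in> borel_measurable M" "integrable M (\<lambda>x. (f x)\<^sup>2)"
  shows "integrable M f"
proof (rule Bochner_Integration.integrable_bound[of _ "\<lambda>x. 1 + (f x)\<^sup>2"])
  interpret finite_measure M by fact
  show "integrable M (\<lambda>x. 1 + (f x)\<^sup>2)" using assms(3) by simp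
  show "AE x in M. norm (f x) \<le> norm (1 + (f x)\<^sup>2)"
    using abs_le_one_plus_sq by (auto intro!: AE_I2)
qed (use assms in auto)

lemma AE_summable_nn:
  fixes g :: "nat \<Rightarrow> 'a \<Rightarrow> real"
  assumes meas: "\<And>k. g k \<in> borel_measurable M" and nn: "\<And>k x. 0 \<le> g k x"
    and fin: "(\<Sum>k. \<integral>\<^sup>+x. ennreal (g k x) \<partial>M) \<noteq> \<top>"
  shows "AE x in M. summable (\<lambda>k. g k x)"
proof -
  have "(\<integral>\<^sup>+x. (\<Sum>k. ennreal (g k x)) \<partial>M) = (\<Sum>k. \<integral>\<^sup>+x. ennreal (g k x) \<partial>M)"
    by (rule nn_integral_suminf) (use meas in auto)
  then have "AE x in M. (\<Sum>k. ennreal (g k x)) \<noteq> \<infinity>"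
    using fin by (intro nn_integral_PInf_AE) (use meas in auto)
  then show ?thesis
    by eventually_elim (rule summable_suminf_not_top, use nn in auto)
qed

lemma mg_conv:
  fixes F :: "nat \<Rightarrow> 'a measure" and f :: "nat \<Rightarrow> 'a \<Rightarrow> real"
  assumes P: "prob_space M"
    and sub: "\<And>k. subalgebra M (F k)"
    and fmeasF: "\<And>j k. j < k \<Longrightarrow> f j \<in> borel_measurable (F k)"
    and fmeas: "\<And>k. f k \<in> borel_measurable M"
    and fsq: "\<And>k. integrable M (\<lambda>\<omega>. (f k \<omega>)\<^sup>2)"
    and orth: "\<And>k g B. g \<in> borel_measurable (F k) \<Longrightarrow> (\<And>\<omega>. \<omega> \<in> space M \<Longrightarrow> \<bar>g \<omega>\<bar> \<le> B)
                 \<Longrightarrow> (\<integral>\<omega>. g \<omega> * f k \<omega> \<partial>M) = 0"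
    and fsum: "summable (\<lambda>k. \<integral>\<omega>. (f k \<omega>)\<^sup>2 \<partial>M)"
  shows "AE \<omega> in M. convergent (\<lambda>n. \<Sum>k<n. f k \<omega>)"
proof -
  interpret prob_space M by fact
  define S where "S n \<omega> = (\<Sum>k<n. f k \<omega>)" for n \<omega>
  have Smeas[measurable]: "S n \<in> borel_measurable M" for n unfolding S_def by (rule borel_measurable_sum) (rule fmeas)
  have SmeasF: "j \<le> k \<Longrightarrow> S j \<in> borel_measurable (F k)" for j k
    unfolding S_def by (intro borel_measurable_sum fmeasF) auto
  have spF: "space (F k) = space M" for k using sub[of k] by (simp add: subalgebra_def)
  have setsF: "sets (F k) \<subseteq> sets M" for k using sub[of k] by (simp add: subalgebra_def)
  have fint: "integrable M (f k)" for k
    by (rule sq_integrable_imp_integrable[OF _ fmeas fsq]) (simp add: finite_measure_axioms)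
  have fsq0: "0 \<le> (\<integral>\<omega>. (f k \<omega>)\<^sup>2 \<partial>M)" for k by simp
  have maxineq: "measure M {\<omega> \<in> space M. \<exists>j\<in>{m..n}. \<epsilon> \<le> \<bar>S j \<omega> - S m \<omega>\<bar>}
      \<le> (\<Sum>k\<in>{m..<n}. \<integral>\<omega>. (f k \<omega>)\<^sup>2 \<partial>M) / \<epsilon>\<^sup>2" if eps: "0 < \<epsilon>" and mn: "m \<le> n" for m n \<epsilon>
  proof -
    define G where "G k = {\<omega> \<in> space M. \<forall>j\<in>{m..k}. \<bar>S j \<omega> - S m \<omega>\<bar> < \<epsilon>}" for k
    define T where "T n \<omega> = (\<Sum>k\<in>{m..<n}. indicator (G k) \<omega> * f k \<omega>)" for n \<omega>
    have GF: "G k \<in> sets (F k)" for k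
    proof -
      have "{\<omega> \<in> space (F k). \<forall>j\<in>{m..k}. \<bar>S j \<omega> - S m \<omega>\<bar> < \<epsilon>} \<in> sets (F k)"
      proof (rule sets.sets_Collect_finite_All)
        fix j assume j: "j \<in> {m..k}"
        have [measurable]: "S j \<in> borel_measurable (F k)" "S m \<in> borel_measurable (F k)"
          using j by (auto intro: SmeasF)
        show "{\<omega> \<in> space (F k). \<bar>S j \<omega> - S m \<omega>\<bar> < \<epsilon>} \<in> sets (F k)" by measurable
      qed simp
      then show ?thesis by (simp add: G_def spF)
    qed
    have GM: "G k \<in> sets M" for k using GF setsF by blast
    have Tmeas[measurable]: "T n \<in> borel_measurable M" for n
      unfolding T_def using GM by (intro borel_measurable_sum) (auto intro!: borel_measurable_times fmeas)
    have II: "\<omega> \<in> space M \<Longrightarrow> (\<omega> \<in> G n \<longrightarrow> T n \<omega> = S n \<omega> - S m \<omega>) \<and> (\<omega> \<notin> G n \<longrightarrow> \<epsilon> \<le> \<bar>T n \<omega>\<bar>)"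
      if "m \<le> n" for n \<omega>
      using that
    proof (induction n rule: dec_induct)
      case base
      then show ?case using eps by (simp add: G_def T_def)
    next
      case (step n)
      have Tsuc: "T (Suc n) \<omega> = T n \<omega> + indicator (G n) \<omega> * f n \<omega>"
        using step.hyps by (simp add: T_def)
      have Ssuc: "S (Suc n) \<omega> = S n \<omega> + f n \<omega>" by (simp add: S_def)
      have Gsuc: "\<omega> \<in> G (Suc n) \<longleftrightarrow> \<omega> \<in> G n \<and> \<bar>S (Suc n) \<omega> - S m \<omega>\<bar> < \<epsilon>"
        using step.hyps step.prems by (auto simp: G_def atLeastAtMostSuc_conv)
      show ?case
      proof (cases "\<omega> \<in> G n")
        case True
        then have "T (Suc n) \<omega> = S (Suc n) \<omega> - S m \<omega>"
          using step.IH step.prems Tsuc Ssuc by simp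
        then show ?thesis using Gsuc True by auto
      next
        case False
        then show ?thesis using step.IH step.prems Tsuc Gsuc by simp
      qed
    qed
    have I: "integrable M (\<lambda>\<omega>. (T n \<omega>)\<^sup>2) \<and> (\<integral>\<omega>. (T n \<omega>)\<^sup>2 \<partial>M) \<le> (\<Sum>k\<in>{m..<n}. \<integral>\<omega>. (f k \<omega>)\<^sup>2 \<partial>M)"
      if "m \<le> n" for n
      using that
    proof (induction n rule: dec_induct)
      case base
      then show ?case by (simp add: T_def)
    next
      case (step n)
      define g where "g \<omega> = indicator (G n) \<omega> * (S n \<omega> - S m \<omega>)" for \<omega>
      have gF: "g \<in> borel_measurable (F n)"
      proof -
        have [measurable]: "S n \<in> borel_measurable (F n)" "S m \<in> borel_measurable (F n)" "G n \<in> sets (F n)"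
          using step.hyps GF by (auto intro: SmeasF)
        show ?thesis unfolding g_def by measurable
      qed
      have gM[measurable]: "g \<in> borel_measurable M" by (rule measurable_from_subalg[OF sub gF])
      have gb: "\<bar>g \<omega>\<bar> \<le> \<epsilon>" for \<omega>
      proof (cases "\<omega> \<in> G n")
        case True
        then have "\<bar>S n \<omega> - S m \<omega>\<bar> < \<epsilon>" using step.hyps by (auto simp: G_def)
        then show ?thesis using True by (simp add: g_def)
      next
        case False then show ?thesis using eps by (simp add: g_def)
      qed
      have eq: "(T (Suc n) \<omega>)\<^sup>2 = (T n \<omega>)\<^sup>2 + 2 * (g \<omega> * f n \<omega>) + (f n \<omega>)\<^sup>2 * indicator (G n) \<omega>"
        if \<omega>: "\<omega> \<in> space M" for \<omega>
      proof -
        have Tsuc: "T (Suc n) \<omega> = T n \<omega> + indicator (G n) \<omega> * f n \<omega>"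
          using step.hyps by (simp add: T_def)
        have "indicator (G n) \<omega> * T n \<omega> = g \<omega>"
          using II[OF step.hyps(1) \<omega>] by (auto simp: g_def indicator_def)
        then show ?thesis unfolding Tsuc
          by (auto simp: power2_eq_square algebra_simps indicator_def)
      qed
      have i1: "integrable M (\<lambda>\<omega>. g \<omega> * f n \<omega>)"
        by (rule Bochner_Integration.integrable_bound[of _ "\<lambda>\<omega>. \<epsilon> * f n \<omega>"])
           (use fint gb eps in \<open>auto intro!: AE_I2 simp: abs_mult mult_right_mono\<close>)
      have i2: "integrable M (\<lambda>\<omega>. (f n \<omega>)\<^sup>2 * indicator (G n) \<omega>)"
        by (rule integrable_real_mult_indicator[OF GM fsq])
      have o: "(\<integral>\<omega>. g \<omega> * f n \<omega> \<partial>M) = 0"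
        by (rule orth[OF gF]) (use gb in auto)
      have int: "integrable M (\<lambda>\<omega>. (T n \<omega>)\<^sup>2 + 2 * (g \<omega> * f n \<omega>) + (f n \<omega>)\<^sup>2 * indicator (G n) \<omega>)"
        using step.IH i1 i2 by auto
      have intS: "integrable M (\<lambda>\<omega>. (T (Suc n) \<omega>)\<^sup>2)"
      proof (rule integrable_cong_AE_imp[OF int])
        show "(\<lambda>\<omega>. (T (Suc n) \<omega>)\<^sup>2) \<in> borel_measurable M" by measurable
        show "AE \<omega> in M. (T n \<omega>)\<^sup>2 + 2 * (g \<omega> * f n \<omega>) + (f n \<omega>)\<^sup>2 * indicator (G n) \<omega> = (T (Suc n) \<omega>)\<^sup>2"
          by (auto intro!: AE_I2 simp: eq)
      qed
      have "(\<integral>\<omega>. (T (Suc n) \<omega>)\<^sup>2 \<partial>M) = (\<integral>\<omega>. (T n \<omega>)\<^sup>2 + 2 * (g \<omega> * f n \<omega>) + (f n \<omega>)\<^sup>2 * indicator (G n) \<omega> \<partial>M)"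
        by (rule Bochner_Integration.integral_cong[OF refl]) (simp add: eq)
      also have "\<dots> = (\<integral>\<omega>. (T n \<omega>)\<^sup>2 \<partial>M) + 2 * (\<integral>\<omega>. g \<omega> * f n \<omega> \<partial>M) + (\<integral>\<omega>. (f n \<omega>)\<^sup>2 * indicator (G n) \<omega> \<partial>M)"
        using step.IH i1 i2 by simp
      finally have eqI: "(\<integral>\<omega>. (T (Suc n) \<omega>)\<^sup>2 \<partial>M) = (\<integral>\<omega>. (T n \<omega>)\<^sup>2 \<partial>M) + 2 * (\<integral>\<omega>. g \<omega> * f n \<omega> \<partial>M) + (\<integral>\<omega>. (f n \<omega>)\<^sup>2 * indicator (G n) \<omega> \<partial>M)" .
      have "(\<integral>\<omega>. (f n \<omega>)\<^sup>2 * indicator (G n) \<omega> \<partial>M) \<le> (\<integral>\<omega>. (f n \<omega>)\<^sup>2 \<partial>M)"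
        by (rule integral_mono[OF i2 fsq]) (auto simp: indicator_def)
      with eqI have "(\<integral>\<omega>. (T (Suc n) \<omega>)\<^sup>2 \<partial>M) \<le> (\<integral>\<omega>. (T n \<omega>)\<^sup>2 \<partial>M) + 2 * (\<integral>\<omega>. g \<omega> * f n \<omega> \<partial>M) + (\<integral>\<omega>. (f n \<omega>)\<^sup>2 \<partial>M)" by linarith
      then have "(\<integral>\<omega>. (T (Suc n) \<omega>)\<^sup>2 \<partial>M) \<le> (\<Sum>k\<in>{m..<n}. \<integral>\<omega>. (f k \<omega>)\<^sup>2 \<partial>M) + (\<integral>\<omega>. (f n \<omega>)\<^sup>2 \<partial>M)"
        using step.IH o by linarith
      then show ?case using intS step.hyps by simp
    qed
    have sub1: "{\<omega> \<in> space M. \<exists>j\<in>{m..n}. \<epsilon> \<le> \<bar>S j \<omega> - S m \<omega>\<bar>} \<subseteq> {\<omega> \<in> space M. \<epsilon>\<^sup>2 \<le> (T n \<omega>)\<^sup>2}"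
    proof safe
      fix \<omega> j assume \<omega>: "\<omega> \<in> space M" and j: "j \<in> {m..n}" "\<epsilon> \<le> \<bar>S j \<omega> - S m \<omega>\<bar>"
      then have "\<omega> \<notin> G n" by (auto simp: G_def not_less)
      then have "\<epsilon> \<le> \<bar>T n \<omega>\<bar>" using II[OF mn \<omega>] by simp
      then show "\<epsilon>\<^sup>2 \<le> (T n \<omega>)\<^sup>2" using eps
        using power_mono[of \<epsilon> "\<bar>T n \<omega>\<bar>" 2] by simp
    qed
    have "measure M {\<omega> \<in> space M. \<exists>j\<in>{m..n}. \<epsilon> \<le> \<bar>S j \<omega> - S m \<omega>\<bar>} \<le> measure M {\<omega> \<in> space M. \<epsilon>\<^sup>2 \<le> (T n \<omega>)\<^sup>2}"
      by (rule finite_measure_mono[OF sub1]) measurable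
    also have "\<dots> \<le> (\<integral>\<omega>. (T n \<omega>)\<^sup>2 \<partial>M) / \<epsilon>\<^sup>2"
      by (rule integral_Markov_inequality_measure[OF conjunct1[OF I[OF mn]]]) (use eps in auto)
    also have "\<dots> \<le> (\<Sum>k\<in>{m..<n}. \<integral>\<omega>. (f k \<omega>)\<^sup>2 \<partial>M) / \<epsilon>\<^sup>2"
      using conjunct2[OF I[OF mn]] eps by (simp add: divide_right_mono)
    finally show ?thesis .
  qed
  define R where "R m = (\<Sum>k. \<integral>\<omega>. (f (k+m) \<omega>)\<^sup>2 \<partial>M)" for m
  have Rlim: "R \<longlonglongrightarrow> 0" unfolding R_def[abs_def] by (rule suminf_exist_split2[OF fsum])
  have Rb: "(\<Sum>k\<in>{m..<n}. \<integral>\<omega>. (f k \<omega>)\<^sup>2 \<partial>M) \<le> R m" for m n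
  proof -
    have "(\<Sum>k\<in>{m..<n}. \<integral>\<omega>. (f k \<omega>)\<^sup>2 \<partial>M) = (\<Sum>k\<in>{0..<n-m}. \<integral>\<omega>. (f (k+m) \<omega>)\<^sup>2 \<partial>M)"
      by (subst sum.atLeastLessThan_shift_0) (simp add: add.commute)
    also have "\<dots> \<le> R m" unfolding R_def
      by (rule sum_le_suminf) (use fsum summable_iff_shift[where f="\<lambda>k. \<integral>\<omega>. (f k \<omega>)\<^sup>2 \<partial>M" and k=m] in auto)
    finally show ?thesis .
  qed
  have Einf: "measure M {\<omega> \<in> space M. \<exists>j\<ge>m. \<delta> \<le> \<bar>S j \<omega> - S m \<omega>\<bar>} \<le> R m / \<delta>\<^sup>2"
    if d: "0 < \<delta>" for m \<delta>
  proof -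
    define A where "A n = {\<omega> \<in> space M. \<exists>j\<in>{m..m+n}. \<delta> \<le> \<bar>S j \<omega> - S m \<omega>\<bar>}" for n
    have Asets: "range A \<subseteq> sets M"
    proof safe
      fix n show "A n \<in> sets M" unfolding A_def by measurable
    qed
    have Ainc: "incseq A"
    proof (rule incseq_SucI)
      fix n show "A n \<subseteq> A (Suc n)" unfolding A_def by auto
    qed
    have UA: "(\<Union>n. A n) = {\<omega> \<in> space M. \<exists>j\<ge>m. \<delta> \<le> \<bar>S j \<omega> - S m \<omega>\<bar>}"
    proof (intro equalityI subsetI)
      fix \<omega> assume "\<omega> \<in> (\<Union>n. A n)" then show "\<omega> \<in> {\<omega> \<in> space M. \<exists>j\<ge>m. \<delta> \<le> \<bar>S j \<omega> - S m \<omega>\<bar>}"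
        unfolding A_def by auto
    next
      fix \<omega> assume "\<omega> \<in> {\<omega> \<in> space M. \<exists>j\<ge>m. \<delta> \<le> \<bar>S j \<omega> - S m \<omega>\<bar>}"
      then obtain j where j: "\<omega> \<in> space M" "j \<ge> m" "\<delta> \<le> \<bar>S j \<omega> - S m \<omega>\<bar>" by auto
      then have "\<omega> \<in> A (j - m)" unfolding A_def by auto
      then show "\<omega> \<in> (\<Union>n. A n)" by blast
    qed
    have lim: "(\<lambda>n. measure M (A n)) \<longlonglongrightarrow> measure M (\<Union>n. A n)"
      by (rule finite_Lim_measure_incseq[OF Asets Ainc])
    have AB: "measure M (A n) \<le> R m / \<delta>\<^sup>2" for n
    proof -
      have "measure M (A n) \<le> (\<Sum>k\<in>{m..<m+n}. \<integral>\<omega>. (f k \<omega>)\<^sup>2 \<partial>M) / \<delta>\<^sup>2"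
        unfolding A_def by (rule maxineq[OF d]) simp
      also have "\<dots> \<le> R m / \<delta>\<^sup>2" using Rb d by (simp add: divide_right_mono)
      finally show ?thesis .
    qed
    have "measure M (\<Union>n. A n) \<le> R m / \<delta>\<^sup>2"
      by (rule LIMSEQ_le_const2[OF lim]) (intro exI[of _ 0] allI impI AB)
    then show ?thesis unfolding UA .
  qed
  have null: "AE \<omega> in M. \<exists>m. \<forall>j\<ge>m. \<bar>S j \<omega> - S m \<omega>\<bar> < \<delta>" if d: "0 < \<delta>" for \<delta>
  proof -
    define N where "N = {\<omega> \<in> space M. \<forall>m. \<exists>j\<ge>m. \<delta> \<le> \<bar>S j \<omega> - S m \<omega>\<bar>}"
    have Nsets: "N \<in> sets M" unfolding N_def by measurable
    have NB: "measure M N \<le> R m / \<delta>\<^sup>2" for m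
    proof -
      have "measure M N \<le> measure M {\<omega> \<in> space M. \<exists>j\<ge>m. \<delta> \<le> \<bar>S j \<omega> - S m \<omega>\<bar>}"
      proof (rule finite_measure_mono)
        show "N \<subseteq> {\<omega> \<in> space M. \<exists>j\<ge>m. \<delta> \<le> \<bar>S j \<omega> - S m \<omega>\<bar>}" unfolding N_def by blast
        show "{\<omega> \<in> space M. \<exists>j\<ge>m. \<delta> \<le> \<bar>S j \<omega> - S m \<omega>\<bar>} \<in> sets M" by measurable
      qed
      then show ?thesis using Einf[OF d, of m] by linarith
    qed
    have lim: "(\<lambda>m. R m / \<delta>\<^sup>2) \<longlonglongrightarrow> 0 / \<delta>\<^sup>2" by (intro tendsto_divide Rlim tendsto_const) (use d in auto)
    have "measure M N \<le> 0 / \<delta>\<^sup>2" by (rule LIMSEQ_le_const[OF lim]) (intro exI[of _ 0] allI impI NB)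
    then have "measure M N \<le> 0" by simp
    then have "measure M N = 0" using measure_nonneg[of M N] by linarith
    then have "emeasure M N = 0" by (simp add: emeasure_eq_measure)
    moreover have seteq: "{\<omega> \<in> space M. \<not> (\<exists>m. \<forall>j\<ge>m. \<bar>S j \<omega> - S m \<omega>\<bar> < \<delta>)} = N"
      by (simp add: N_def not_less)
    ultimately show ?thesis using AE_iff_measurable[OF Nsets seteq] by simp
  qed
  have "AE \<omega> in M. \<forall>i::nat. \<exists>m. \<forall>j\<ge>m. \<bar>S j \<omega> - S m \<omega>\<bar> < 1 / Suc i"
    unfolding AE_all_countable by (intro allI null) simp
  then show ?thesis
  proof eventually_elim
    case (elim \<omega>)
    have "Cauchy (\<lambda>n. S n \<omega>)"
    proof (rule CauchyI)
      fix e :: real assume e: "0 < e"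
      obtain i where "inverse (real (Suc i)) < e / 2"
        using reals_Archimedean[of "e/2"] e by auto
      then have i: "1 / real (Suc i) < e / 2" by (simp add: inverse_eq_divide)
      obtain m where m: "\<And>j. j \<ge> m \<Longrightarrow> \<bar>S j \<omega> - S m \<omega>\<bar> < 1 / Suc i" using elim by blast
      show "\<exists>M. \<forall>a\<ge>M. \<forall>b\<ge>M. norm (S a \<omega> - S b \<omega>) < e"
      proof (intro exI allI impI)
        fix a b assume "m \<le> a" "m \<le> b"
        then have "\<bar>S a \<omega> - S m \<omega>\<bar> < e/2" "\<bar>S b \<omega> - S m \<omega>\<bar> < e/2" using m i by fastforce+
        then show "norm (S a \<omega> - S b \<omega>) < e" unfolding real_norm_def by arith
      qed
    qed
    then show ?case by (simp add: Cauchy_convergent_iff S_def)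
  qed
qed




lemma final_det:
  fixes xs :: "nat \<Rightarrow> 'v::heine_borel" and H :: "'v \<Rightarrow> 'v" and Z :: "'v set" and \<alpha> :: "nat \<Rightarrow> real"
  assumes Hc: "continuous_on UNIV H"
    and Zfix: "\<And>z. z \<in> Z \<Longrightarrow> H z = z"
    and Zdense: "\<And>y e. H y = y \<Longrightarrow> 0 < e \<Longrightarrow> \<exists>z\<in>Z. dist z y < e"
    and z0: "z0 \<in> Z"
    and conv: "\<And>z. z \<in> Z \<Longrightarrow> convergent (\<lambda>k. dist (xs k) z)"
    and rsum: "summable (\<lambda>k. \<alpha> k * (dist (xs k) (H (xs k)))\<^sup>2)"
    and apos: "\<And>k. 0 < \<alpha> k" and nsum: "\<not> summable \<alpha>"
  shows "\<exists>y. H y = y \<and> xs \<longlonglongrightarrow> y"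
proof -
  define r where "r k = dist (xs k) (H (xs k))" for k
  have freq: "\<exists>k\<ge>N. r k < e" if e: "0 < e" for e N
  proof (rule ccontr)
    assume "\<not> ?thesis"
    then have ge: "\<And>k. k \<ge> N \<Longrightarrow> r k \<ge> e" by (simp add: not_less)
    have sm: "summable (\<lambda>k. \<alpha> k * (r k)\<^sup>2 / e\<^sup>2)" using rsum by (simp add: r_def summable_divide)
    have ev: "eventually (\<lambda>k. norm (\<alpha> k) \<le> \<alpha> k * (r k)\<^sup>2 / e\<^sup>2) sequentially"
      unfolding eventually_sequentially
    proof (intro exI allI impI)
      fix k assume "N \<le> k"
      then have "e\<^sup>2 \<le> (r k)\<^sup>2" using ge[of k] e by (intro power_mono) auto
      then have "\<alpha> k * e\<^sup>2 \<le> \<alpha> k * (r k)\<^sup>2" using apos[of k] by (intro mult_left_mono) auto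
      then show "norm (\<alpha> k) \<le> \<alpha> k * (r k)\<^sup>2 / e\<^sup>2" using apos[of k] e by (simp add: field_simps)
    qed
    have "summable \<alpha>" by (rule summable_comparison_test_ev[OF ev sm])
    then show False using nsum by simp
  qed
  have "\<forall>pr. \<exists>k. k \<ge> snd pr \<and> r k < 1 / Suc (fst pr)" using freq by simp
  from choice[OF this] obtain G where G: "\<forall>pr. G pr \<ge> snd pr \<and> r (G pr) < 1 / Suc (fst pr)" by blast
  define g where "g n N = G (n, N)" for n N
  have g: "g n N \<ge> N \<and> r (g n N) < 1 / Suc n" for n N using G[rule_format, of "(n, N)"] by (simp add: g_def)
  define \<sigma> where "\<sigma> = rec_nat (g 0 0) (\<lambda>n s. g (Suc n) (Suc s))"
  have s0: "\<sigma> 0 = g 0 0" and sS: "\<sigma> (Suc n) = g (Suc n) (Suc (\<sigma> n))" for n by (simp_all add: \<sigma>_def)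
  have smono: "strict_mono \<sigma>"
    unfolding strict_mono_Suc_iff
  proof
    fix n show "\<sigma> n < \<sigma> (Suc n)" using g[where n="Suc n" and N="Suc (\<sigma> n)"] unfolding sS by simp
  qed
  have rs: "r (\<sigma> n) < 1 / Suc n" for n
  proof (cases n)
    case 0 then show ?thesis using g[where n=0 and N=0] s0 by simp
  next
    case (Suc m) then show ?thesis using g[where n="Suc m" and N="Suc (\<sigma> m)"] sS[of m] by simp
  qed
  obtain c where c: "\<And>k. dist (xs k) z0 \<le> c"
    using convergent_imp_Bseq[OF conv[OF z0]] by (auto simp: Bseq_def)
  have bdd: "bounded (range (xs \<circ> \<sigma>))"
    unfolding bounded_def by (intro exI[of _ z0] exI[of _ c]) (use c in \<open>auto simp: dist_commute\<close>)
  obtain \<tau> y where tmono: "strict_mono \<tau>" and ylim: "((xs \<circ> \<sigma>) \<circ> \<tau>) \<longlonglongrightarrow> y"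
    using bounded_imp_convergent_subsequence[OF bdd] by blast
  define \<nu> where "\<nu> = \<sigma> \<circ> \<tau>"
  have nmono: "strict_mono \<nu>" unfolding \<nu>_def using smono tmono by (rule strict_mono_o)
  have ylim': "(\<lambda>n. xs (\<nu> n)) \<longlonglongrightarrow> y" using ylim by (simp add: \<nu>_def o_def)
  have rlim: "(\<lambda>n. r (\<nu> n)) \<longlonglongrightarrow> 0"
  proof (rule tendsto_sandwich[of "\<lambda>_. 0" _ _ "\<lambda>n. 1 / Suc n"])
    show "eventually (\<lambda>n. 0 \<le> r (\<nu> n)) sequentially" by (simp add: r_def)
    show "eventually (\<lambda>n. r (\<nu> n) \<le> 1 / Suc n) sequentially"
    proof (intro always_eventually allI)
      fix n
      have "n \<le> \<tau> n" using tmono by (rule seq_suble)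
      then have "1 / real (Suc (\<tau> n)) \<le> 1 / Suc n" by (intro divide_left_mono) auto
      then show "r (\<nu> n) \<le> 1 / Suc n" using rs[of "\<tau> n"] by (simp add: \<nu>_def)
    qed
    show "(\<lambda>n. 1 / real (Suc n)) \<longlonglongrightarrow> 0" using LIMSEQ_inverse_real_of_nat by (simp add: inverse_eq_divide)
  qed simp
  have Hlim: "(\<lambda>n. H (xs (\<nu> n))) \<longlonglongrightarrow> H y"
    by (rule continuous_on_tendsto_compose[OF Hc ylim']) auto
  have "(\<lambda>n. r (\<nu> n)) \<longlonglongrightarrow> dist y (H y)" unfolding r_def by (intro tendsto_dist ylim' Hlim)
  with rlim have "dist y (H y) = 0" using LIMSEQ_unique by blast
  then have Hy: "H y = y" by simp
  have "xs \<longlonglongrightarrow> y"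
  proof (rule metric_LIMSEQ_I)
    fix e :: real assume e: "0 < e"
    obtain z where z: "z \<in> Z" "dist z y < e/3" using Zdense[OF Hy, of "e/3"] e by auto
    obtain lz where lz: "(\<lambda>k. dist (xs k) z) \<longlonglongrightarrow> lz" using conv[OF z(1)] by (auto simp: convergent_def)
    have "(\<lambda>n. dist (xs (\<nu> n)) z) \<longlonglongrightarrow> lz" using LIMSEQ_subseq_LIMSEQ[OF lz nmono] by (simp add: o_def)
    moreover have "(\<lambda>n. dist (xs (\<nu> n)) z) \<longlonglongrightarrow> dist y z" by (intro tendsto_dist ylim' tendsto_const)
    ultimately have "lz = dist y z" using LIMSEQ_unique by blast
    then have "lz < e/3" using z by (simp add: dist_commute)
    then have "eventually (\<lambda>k. dist (xs k) z < e/3) sequentially" by (rule order_tendstoD(2)[OF lz])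
    then obtain N where N: "\<And>k. k \<ge> N \<Longrightarrow> dist (xs k) z < e/3" by (auto simp: eventually_sequentially)
    show "\<exists>N. \<forall>k\<ge>N. dist (xs k) y < e"
    proof (intro exI allI impI)
      fix k assume "N \<le> k"
      then have "dist (xs k) y \<le> dist (xs k) z + dist z y" by (intro dist_triangle)
      with N[OF \<open>N \<le> k\<close>] z(2) show "dist (xs k) y < e" using e by linarith
    qed
  qed
  then show ?thesis using Hy by blast
qed




locale sa =
  fixes M :: "'a measure" and H :: "real^'d \<Rightarrow> real^'d" and x w :: "nat \<Rightarrow> 'a \<Rightarrow> real^'d"
    and \<alpha> :: "nat \<Rightarrow> real" and p A B :: real and xbar :: "real^'d"
  assumes P: "prob_space M" and p1: "1 < p" and p2: "p \<le> 2"
    and nonexp: "\<And>u v. norm (H u - H v) \<le> norm (u - v)"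
    and x0_meas: "x 0 \<in> borel_measurable M"
    and w_int: "\<And>k. integrable M (w k)"
    and iter: "\<And>k \<omega>. \<omega> \<in> space M \<Longrightarrow>
                 x (Suc k) \<omega> = x k \<omega> + \<alpha> k *\<^sub>R (H (x k \<omega>) - x k \<omega> + w k \<omega>)"
    and mart: "\<And>k i. AE \<omega> in M.
                 real_cond_exp M (nat_filtration M x k) (\<lambda>\<eta>. w k \<eta> $ i) \<omega> = 0"
    and Hxbar: "H xbar = xbar" and Apos: "A > 0" and B0: "B \<ge> 0"
    and moment: "\<And>k. AE \<omega> in M.
                 nn_cond_exp M (nat_filtration M x k) (\<lambda>\<eta>. ennreal (norm (w k \<eta>) powr p)) \<omega>
                   \<le> ennreal (A + B * norm (x k \<omega> - xbar) powr p)"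
    and apos: "\<And>k. \<alpha> k > 0" and adec: "decseq \<alpha>"
    and nsum: "\<not> summable \<alpha>"
    and psum: "summable (\<lambda>k. \<alpha> k powr p)"
begin

abbreviation "F \<equiv> nat_filtration M x"

lemma Hcont: "continuous_on UNIV H"
  unfolding continuous_on_iff
proof (intro ballI allI impI)
  fix u e :: real assume "0 < e"
  show "\<exists>d>0. \<forall>v\<in>UNIV. dist v u < d \<longrightarrow> dist (H v) (H u) < e" for u
    using \<open>0 < e\<close> nonexp by (intro exI[of _ e]) (auto simp: dist_norm intro: le_less_trans)
qed

lemma Hmeas[measurable]: "H \<in> borel_measurable borel"
  by (rule borel_measurable_continuous_onI[OF Hcont])

lemma wmeas[measurable]: "w k \<in> borel_measurable M"
  using w_int by (rule borel_measurable_integrable)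

lemma xmeas[measurable]: "x k \<in> borel_measurable M"
proof (induction k)
  case 0 then show ?case by (rule x0_meas)
next
  case (Suc k)
  note [measurable] = Suc
  have "(\<lambda>\<omega>. x k \<omega> + \<alpha> k *\<^sub>R (H (x k \<omega>) - x k \<omega> + w k \<omega>)) \<in> borel_measurable M" by measurable
  then show ?case using measurable_cong[of M "x (Suc k)", OF iter] by simp
qed

definition Gen :: "nat \<Rightarrow> 'a set set" where
  "Gen k = (\<Union>i\<in>{..k}. {x i -` A \<inter> space M | A. A \<in> sets borel})"

lemma Gen_Pow: "Gen k \<subseteq> Pow (space M)" by (auto simp: Gen_def)

lemma Gen_sets: "Gen k \<subseteq> sets M"
  unfolding Gen_def by (auto intro: measurable_sets[OF xmeas])

lemma spF: "space (F k) = space M"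
  unfolding nat_filtration_def by (rule space_measure_of_conv)

lemma setsF: "sets (F k) = sigma_sets (space M) (Gen k)"
  unfolding nat_filtration_def Gen_def[symmetric] by (rule sets_measure_of[OF Gen_Pow])

lemma subF: "subalgebra M (F k)"
  unfolding subalgebra_def using sets.sigma_sets_subset[OF Gen_sets] by (simp add: spF setsF)

lemma Fmono: "j \<le> k \<Longrightarrow> sets (F j) \<subseteq> sets (F k)"
  unfolding setsF by (rule sigma_sets_mono') (unfold Gen_def, rule UN_mono, auto)

lemma subFF: "j \<le> k \<Longrightarrow> subalgebra (F k) (F j)"
  unfolding subalgebra_def using Fmono by (simp add: spF)

lemma measF_mono: "f \<in> borel_measurable (F j) \<Longrightarrow> j \<le> k \<Longrightarrow> f \<in> borel_measurable (F k)"
  by (rule measurable_from_subalg[OF subFF])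

lemma measF_M: "f \<in> borel_measurable (F j) \<Longrightarrow> f \<in> borel_measurable M"
  by (rule measurable_from_subalg[OF subF])

lemma xF: "j \<le> k \<Longrightarrow> x j \<in> borel_measurable (F k)"
proof (rule measurableI)
  fix A :: "(real^'d) set" assume j: "j \<le> k" and A: "A \<in> sets borel"
  have "x j -` A \<inter> space M \<in> Gen k" unfolding Gen_def using j A by blast
  then show "x j -` A \<inter> space (F k) \<in> sets (F k)" unfolding spF setsF by (rule sigma_sets.Basic)
qed simp

lemma wF: "w k \<in> borel_measurable (F (Suc k))"
proof -
  have [measurable]: "x k \<in> borel_measurable (F (Suc k))" "x (Suc k) \<in> borel_measurable (F (Suc k))"
    by (auto intro: xF)
  have "(\<lambda>\<omega>. (1 / \<alpha> k) *\<^sub>R (x (Suc k) \<omega> - x k \<omega>) - (H (x k \<omega>) - x k \<omega>)) \<in> borel_measurable (F (Suc k))"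
    by measurable
  moreover have "\<omega> \<in> space (F (Suc k)) \<Longrightarrow> (1 / \<alpha> k) *\<^sub>R (x (Suc k) \<omega> - x k \<omega>) - (H (x k \<omega>) - x k \<omega>) = w k \<omega>" for \<omega>
    using iter[of \<omega> k] apos[of k] by (simp add: spF scaleR_add_right)
  ultimately show ?thesis using measurable_cong by (metis (no_types, lifting))
qed

lemma sfs: "sigma_finite_subalgebra M (F k)"
proof -
  interpret prob_space M by (rule P)
  have "finite_measure_subalgebra M (F k)"
    by (simp add: finite_measure_subalgebra_def finite_measure_subalgebra_axioms_def subF finite_measure_axioms)
  then show ?thesis by (rule finite_measure_subalgebra_is_sigma_finite)
qed


definition qq where "qq z k \<omega> = 1 + (norm (x k \<omega> - z))\<^sup>2"
definition rr where "rr z k \<omega> = sqrt (qq z k \<omega>)"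
definition Wv where "Wv k \<omega> = \<alpha> k *\<^sub>R w k \<omega>"
definition yv where "yv k \<omega> = x k \<omega> + \<alpha> k *\<^sub>R (H (x k \<omega>) - x k \<omega>)"
definition ev where "ev z k \<omega> = (if norm (Wv k \<omega>) \<le> rr z k \<omega> then Wv k \<omega> else 0)"
definition hv where "hv z k \<omega> = (if norm (Wv k \<omega>) \<le> rr z k \<omega> then 0 else Wv k \<omega>)"
definition th where "th z k \<omega> = (norm (Wv k \<omega>) / rr z k \<omega>) powr p"
definition dd where "dd z k \<omega> = inner (yv k \<omega> - z) (ev z k \<omega>) / qq z k \<omega>"
definition d1 where "d1 z k \<omega> = inner (yv k \<omega> - z) (Wv k \<omega>) / qq z k \<omega>"
definition hd where "hd z k \<omega> = inner (yv k \<omega> - z) (hv z k \<omega>) / qq z k \<omega>"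
definition LL where "LL = 1 + 2 * \<alpha> 0"

lemma LL1: "LL \<ge> 1" using apos[of 0] by (simp add: LL_def)

lemma qq1: "qq z k \<omega> \<ge> 1" by (simp add: qq_def)
lemma rr1: "rr z k \<omega> \<ge> 1" using qq1[of z k \<omega>] by (simp add: rr_def)
lemma rrsq: "(rr z k \<omega>)\<^sup>2 = qq z k \<omega>" using qq1[of z k \<omega>] by (simp add: rr_def)
lemma s_le_rr: "norm (x k \<omega> - z) \<le> rr z k \<omega>"
  unfolding rr_def qq_def by (rule real_le_rsqrt) simp

lemma alpha_le: "\<alpha> k \<le> \<alpha> 0" using adec by (simp add: decseq_def)

lemma y_bound:
  assumes Hz: "H z = z"
  shows "norm (yv k \<omega> - z) \<le> LL * norm (x k \<omega> - z)"
proof -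
  define a where "a = \<alpha> k"
  have a: "0 < a" "a \<le> \<alpha> 0" using apos alpha_le by (auto simp: a_def)
  have Hne: "norm (H (x k \<omega>) - z) \<le> norm (x k \<omega> - z)" using nonexp[of "x k \<omega>" z] Hz by simp
  have yz: "yv k \<omega> - z = (1-a) *\<^sub>R (x k \<omega> - z) + a *\<^sub>R (H (x k \<omega>) - z)"
    by (simp add: yv_def a_def algebra_simps)
  have "norm (yv k \<omega> - z) \<le> norm ((1-a) *\<^sub>R (x k \<omega> - z)) + norm (a *\<^sub>R (H (x k \<omega>) - z))"
    unfolding yz by (rule norm_triangle_ineq)
  also have "\<dots> = \<bar>1-a\<bar> * norm (x k \<omega> - z) + a * norm (H (x k \<omega>) - z)" using a by simp
  also have "\<dots> \<le> \<bar>1-a\<bar> * norm (x k \<omega> - z) + a * norm (x k \<omega> - z)" using Hne a by simp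
  also have "\<dots> \<le> LL * norm (x k \<omega> - z)"
  proof -
    have "\<bar>1-a\<bar> + a \<le> LL" using a unfolding LL_def by linarith
    from mult_right_mono[OF this norm_ge_zero[of "x k \<omega> - z"]] show ?thesis by (simp add: algebra_simps)
  qed
  finally show ?thesis .
qed

lemma inner_bound:
  fixes a b :: "real^'d"
  assumes "norm a \<le> LL * s" "0 \<le> s" "s \<le> \<rho>" "1 \<le> \<rho>"
  shows "\<bar>inner a b\<bar> / \<rho>\<^sup>2 \<le> LL * (norm b / \<rho>)"
proof -
  have "\<bar>inner a b\<bar> \<le> norm a * norm b" by (rule Cauchy_Schwarz_ineq2)
  also have "\<dots> \<le> (LL * \<rho>) * norm b"
  proof (rule mult_right_mono)
    have "LL * s \<le> LL * \<rho>" using assms LL1 by (intro mult_left_mono) auto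
    then show "norm a \<le> LL * \<rho>" using assms(1) by linarith
  qed simp
  finally have "\<bar>inner a b\<bar> \<le> (LL * \<rho>) * norm b" .
  then have "\<bar>inner a b\<bar> / \<rho>\<^sup>2 \<le> (LL * \<rho>) * norm b / \<rho>\<^sup>2"
    using assms by (intro divide_right_mono) auto
  also have "\<dots> = LL * (norm b / \<rho>)" using assms by (simp add: power2_eq_square field_simps)
  finally show ?thesis .
qed

lemma gen_bound:
  assumes Hz: "H z = z"
  shows "\<bar>inner (yv k \<omega> - z) b\<bar> / qq z k \<omega> \<le> LL * (norm b / rr z k \<omega>)"
  using inner_bound[OF y_bound[OF Hz] norm_ge_zero s_le_rr rr1] by (simp add: rrsq)

lemma dd_bound: "H z = z \<Longrightarrow> \<bar>dd z k \<omega>\<bar> \<le> LL * (norm (ev z k \<omega>) / rr z k \<omega>)"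
  using gen_bound[of z k \<omega> "ev z k \<omega>"] qq1[of z k \<omega>] by (simp add: dd_def abs_div)
lemma hd_bound0: "H z = z \<Longrightarrow> \<bar>hd z k \<omega>\<bar> \<le> LL * (norm (hv z k \<omega>) / rr z k \<omega>)"
  using gen_bound[of z k \<omega> "hv z k \<omega>"] qq1[of z k \<omega>] by (simp add: hd_def abs_div)
lemma d1_bound0: "H z = z \<Longrightarrow> \<bar>d1 z k \<omega>\<bar> \<le> LL * (norm (Wv k \<omega>) / rr z k \<omega>)"
  using gen_bound[of z k \<omega> "Wv k \<omega>"] qq1[of z k \<omega>] by (simp add: d1_def abs_div)

lemma ev_le1: "norm (ev z k \<omega>) / rr z k \<omega> \<le> 1"
  using rr1[of z k \<omega>] by (auto simp: ev_def)

lemma th0: "th z k \<omega> \<ge> 0" by (simp add: th_def)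

lemma ev_sq: "(norm (ev z k \<omega>) / rr z k \<omega>)\<^sup>2 \<le> th z k \<omega>"
proof -
  define v where "v = norm (ev z k \<omega>) / rr z k \<omega>"
  have rp: "rr z k \<omega> > 0" using rr1[of z k \<omega>] by simp
  have v0: "v \<ge> 0" using rp by (simp add: v_def)
  have v1: "v \<le> 1" using ev_le1 by (simp add: v_def)
  show ?thesis
  proof (cases "norm (Wv k \<omega>) \<le> rr z k \<omega>")
    case True
    then have vv: "v = norm (Wv k \<omega>) / rr z k \<omega>" by (simp add: v_def ev_def)
    show ?thesis
    proof (cases "v = 0")
      case True then show ?thesis using th0 by (simp add: v_def[symmetric])
    next
      case False
      then have "v > 0" using v0 by simp
      then have "v powr 2 \<le> v powr p" using v1 p2 by (intro powr_mono') auto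
      then show ?thesis using \<open>v > 0\<close> by (simp add: th_def vv[symmetric] v_def[symmetric] powr_numeral)
    qed
  next
    case False then show ?thesis using th0 by (simp add: ev_def)
  qed
qed

lemma hv_th: "norm (hv z k \<omega>) / rr z k \<omega> \<le> th z k \<omega>"
proof (cases "norm (Wv k \<omega>) \<le> rr z k \<omega>")
  case True then show ?thesis using th0 by (simp add: hv_def)
next
  case False
  have rp: "rr z k \<omega> > 0" using rr1[of z k \<omega>] by simp
  define u where "u = norm (Wv k \<omega>) / rr z k \<omega>"
  have ug: "u > 1" using False rp by (simp add: u_def)
  have "u powr 1 \<le> u powr p" using ug p1 by (intro powr_mono) auto
  then show ?thesis using ug False rp by (simp add: th_def hv_def u_def)
qed

lemma dd_le: "H z = z \<Longrightarrow> \<bar>dd z k \<omega>\<bar> \<le> LL"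
  using dd_bound[of z k \<omega>] mult_left_mono[OF ev_le1[of z k \<omega>], of LL] LL1 by simp

lemma dd_sq: "H z = z \<Longrightarrow> (dd z k \<omega>)\<^sup>2 \<le> LL\<^sup>2 * th z k \<omega>"
proof -
  assume Hz: "H z = z"
  have "(dd z k \<omega>)\<^sup>2 = \<bar>dd z k \<omega>\<bar>\<^sup>2" by simp
  also have "\<dots> \<le> (LL * (norm (ev z k \<omega>) / rr z k \<omega>))\<^sup>2"
    using dd_bound[OF Hz, of k \<omega>] by (intro power_mono) auto
  also have "\<dots> = LL\<^sup>2 * (norm (ev z k \<omega>) / rr z k \<omega>)\<^sup>2" by (simp add: power_mult_distrib power_divide)
  also have "\<dots> \<le> LL\<^sup>2 * th z k \<omega>" using ev_sq by (intro mult_left_mono) auto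
  finally show ?thesis .
qed

lemma hd_bound: "H z = z \<Longrightarrow> \<bar>hd z k \<omega>\<bar> \<le> LL * th z k \<omega>"
  using hd_bound0[of z k \<omega>] mult_left_mono[OF hv_th[of z k \<omega>], of LL] LL1 by simp

lemma d1_bound: "H z = z \<Longrightarrow> \<bar>d1 z k \<omega>\<bar> \<le> LL * \<alpha> k * norm (w k \<omega>)"
proof -
  assume Hz: "H z = z"
  have "norm (Wv k \<omega>) / rr z k \<omega> \<le> norm (Wv k \<omega>)"
    using divide_left_mono[OF rr1[of z k \<omega>], of "norm (Wv k \<omega>)"] rr1[of z k \<omega>] by simp
  also have "norm (Wv k \<omega>) = \<alpha> k * norm (w k \<omega>)" using apos[of k] by (simp add: Wv_def)
  finally have "LL * (norm (Wv k \<omega>) / rr z k \<omega>) \<le> LL * (\<alpha> k * norm (w k \<omega>))"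
    using LL1 by (intro mult_left_mono) auto
  then show ?thesis using d1_bound0[OF Hz, of k \<omega>] by (simp add: mult.assoc)
qed

lemma dd_split: "dd z k \<omega> = d1 z k \<omega> - hd z k \<omega>"
proof -
  have "Wv k \<omega> = ev z k \<omega> + hv z k \<omega>" by (simp add: ev_def hv_def)
  then show ?thesis by (simp add: dd_def d1_def hd_def inner_add_right add_divide_distrib)
qed


lemma vec_nth_meas[measurable]: "(\<lambda>v::real^'d. v $ i) \<in> borel_measurable borel"
proof -
  have "(\<lambda>v::real^'d. v \<bullet> axis i 1) \<in> borel_measurable borel" by measurable
  then show ?thesis by (simp add: inner_axis)
qed

lemma meas_x:
  assumes [measurable]: "x k \<in> borel_measurable N"
  shows "qq z k \<in> borel_measurable N" "rr z k \<in> borel_measurable N" "yv k \<in> borel_measurable N"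
  unfolding qq_def[abs_def] rr_def[abs_def] yv_def[abs_def] by measurable

lemma meas_xw:
  assumes [measurable]: "x k \<in> borel_measurable N" "w k \<in> borel_measurable N"
  shows "Wv k \<in> borel_measurable N" "ev z k \<in> borel_measurable N" "hv z k \<in> borel_measurable N"
    "th z k \<in> borel_measurable N" "dd z k \<in> borel_measurable N" "d1 z k \<in> borel_measurable N"
    "hd z k \<in> borel_measurable N"
proof -
  note [measurable] = meas_x[OF assms(1)]
  show W[measurable]: "Wv k \<in> borel_measurable N" unfolding Wv_def[abs_def] by measurable
  show [measurable]: "ev z k \<in> borel_measurable N" unfolding ev_def[abs_def] by measurable
  show [measurable]: "hv z k \<in> borel_measurable N" unfolding hv_def[abs_def] by measurable
  show "th z k \<in> borel_measurable N" unfolding th_def[abs_def] by measurable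
  show "dd z k \<in> borel_measurable N" unfolding dd_def[abs_def] by measurable
  show "d1 z k \<in> borel_measurable N" unfolding d1_def[abs_def] by measurable
  show "hd z k \<in> borel_measurable N" unfolding hd_def[abs_def] by measurable
qed

lemmas measM[measurable] = meas_x[OF xmeas] meas_xw[OF xmeas wmeas]
lemmas measF = meas_x[OF xF[OF order_refl]] meas_xw[OF xF[OF le_SucI[OF order_refl]] wF]

definition CC where "CC z = A + B * (1 + norm (z - xbar)) powr p"

lemma CC0: "CC z \<ge> 0" using Apos B0 by (simp add: CC_def)

lemma th_int:
  assumes Hz: "H z = z"
  shows "(\<integral>\<^sup>+\<omega>. ennreal (th z k \<omega>) \<partial>M) \<le> ennreal (\<alpha> k powr p * CC z)"
proof -
  interpret sigma_finite_subalgebra M "F k" by (rule sfs)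
  interpret prob_space M by (rule P)
  define fF where "fF \<omega> = ennreal (\<alpha> k powr p * rr z k \<omega> powr (-p))" for \<omega>
  have [measurable]: "rr z k \<in> borel_measurable (F k)" by (rule measF)
  have fFm: "fF \<in> borel_measurable (F k)" unfolding fF_def by measurable
  have gm: "(\<lambda>\<eta>. ennreal (norm (w k \<eta>) powr p)) \<in> borel_measurable M" by measurable
  have eq: "ennreal (th z k \<omega>) = fF \<omega> * ennreal (norm (w k \<omega>) powr p)" for \<omega>
  proof -
    have rp: "rr z k \<omega> > 0" using rr1[of z k \<omega>] by simp
    have "th z k \<omega> = \<alpha> k powr p * rr z k \<omega> powr (-p) * norm (w k \<omega>) powr p"
      using apos[of k] rp by (simp add: th_def Wv_def powr_divide powr_mult powr_minus divide_inverse inverse_powr)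
    then show ?thesis unfolding fF_def by (simp add: ennreal_mult)
  qed
  have pt: "fF \<omega> * ennreal (A + B * norm (x k \<omega> - xbar) powr p) \<le> ennreal (\<alpha> k powr p * CC z)" for \<omega>
  proof -
    define r where "r = rr z k \<omega>"
    define t where "t = norm (x k \<omega> - xbar)"
    define c where "c = norm (z - xbar)"
    have r1: "r \<ge> 1" using rr1 by (simp add: r_def)
    have rp1: "r powr p \<ge> 1" using r1 p1 by (intro ge_one_powr_ge_zero) auto
    have rinv: "r powr (-p) \<le> 1" "r powr (-p) \<ge> 0" using rp1 by (auto simp: powr_minus inverse_le_1_iff)
    have "t \<le> norm (x k \<omega> - z) + c" unfolding t_def c_def
      using norm_triangle_ineq[of "x k \<omega> - z" "z - xbar"] by simp
    also have "\<dots> \<le> r + c" using s_le_rr by (simp add: r_def)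
    also have "\<dots> \<le> r * (1 + c)"
    proof -
      have "c * 1 \<le> c * r" using r1 by (intro mult_left_mono) (auto simp: c_def)
      then show ?thesis by (simp add: algebra_simps)
    qed
    finally have "t / r \<le> 1 + c" using r1 by (simp add: divide_le_eq mult.commute)
    then have tr: "(t / r) powr p \<le> (1 + c) powr p"
      using r1 p1 by (intro powr_mono2) (auto simp: t_def)
    have "r powr (-p) * (A + B * t powr p) = A * r powr (-p) + B * (t / r) powr p"
      using r1 by (simp add: powr_divide powr_minus divide_inverse algebra_simps powr_mult inverse_powr)
    also have "\<dots> \<le> A * 1 + B * (1 + c) powr p"
      using rinv Apos B0 tr by (intro add_mono mult_left_mono) auto
    finally have le: "r powr (-p) * (A + B * t powr p) \<le> CC z" by (simp add: CC_def c_def)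
    have "fF \<omega> * ennreal (A + B * norm (x k \<omega> - xbar) powr p)
        = ennreal (\<alpha> k powr p * (r powr (-p) * (A + B * t powr p)))"
    proof -
      have "fF \<omega> * ennreal (A + B * norm (x k \<omega> - xbar) powr p) = ennreal (\<alpha> k powr p * r powr (-p) * (A + B * t powr p))"
        unfolding fF_def r_def t_def by (rule ennreal_mult[symmetric]) (use Apos B0 in auto)
      then show ?thesis by (simp add: mult.assoc)
    qed
    also have "\<dots> \<le> ennreal (\<alpha> k powr p * CC z)"
      using le by (intro ennreal_leI mult_left_mono) auto
    finally show ?thesis .
  qed
  have "(\<integral>\<^sup>+\<omega>. ennreal (th z k \<omega>) \<partial>M) = (\<integral>\<^sup>+\<omega>. fF \<omega> * ennreal (norm (w k \<omega>) powr p) \<partial>M)"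
    by (simp add: eq)
  also have "\<dots> = (\<integral>\<^sup>+\<omega>. fF \<omega> * nn_cond_exp M (F k) (\<lambda>\<eta>. ennreal (norm (w k \<eta>) powr p)) \<omega> \<partial>M)"
    by (rule nn_cond_exp_intg[OF fFm gm, symmetric])
  also have "\<dots> \<le> (\<integral>\<^sup>+\<omega>. fF \<omega> * ennreal (A + B * norm (x k \<omega> - xbar) powr p) \<partial>M)"
    using moment[of k] by (intro nn_integral_mono_AE) (auto elim!: eventually_mono intro: mult_left_mono)
  also have "\<dots> \<le> (\<integral>\<^sup>+\<omega>. ennreal (\<alpha> k powr p * CC z) \<partial>M)"
    by (intro nn_integral_mono pt)
  also have "\<dots> = ennreal (\<alpha> k powr p * CC z)" by (simp add: emeasure_space_1)
  finally show ?thesis .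
qed

lemma th_summable:
  assumes Hz: "H z = z"
  shows "AE \<omega> in M. summable (\<lambda>k. th z k \<omega>)"
proof (rule AE_summable_nn)
  show "th z k \<in> borel_measurable M" for k by measurable
  show "0 \<le> th z k \<omega>" for k \<omega> by (rule th0)
  have "(\<Sum>k. \<integral>\<^sup>+\<omega>. ennreal (th z k \<omega>) \<partial>M) \<le> (\<Sum>k. ennreal (\<alpha> k powr p * CC z))"
    by (intro suminf_le th_int[OF Hz]) auto
  moreover have "(\<Sum>k. ennreal (\<alpha> k powr p * CC z)) \<noteq> \<top>"
    by (rule ennreal_suminf_neq_top) (use psum CC0 in \<open>auto intro: summable_mult2\<close>)
  ultimately show "(\<Sum>k. \<integral>\<^sup>+\<omega>. ennreal (th z k \<omega>) \<partial>M) \<noteq> \<top>" by (auto simp: top_unique)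
qed


lemma w_comp_int: "integrable M (\<lambda>\<omega>. w k \<omega> $ i)"
proof -
  have "integrable M (\<lambda>\<omega>. w k \<omega> \<bullet> axis i 1)" using w_int by auto
  then show ?thesis by (simp add: inner_axis)
qed

lemma w_norm_int: "integrable M (\<lambda>\<omega>. norm (w k \<omega>))"
  using w_int by (rule integrable_norm)


lemma rr_le_qq: "rr z k \<omega> \<le> qq z k \<omega>"
proof -
  have q: "qq z k \<omega> \<ge> 1" by (rule qq1)
  have "rr z k \<omega> * 1 \<le> rr z k \<omega> * rr z k \<omega>" using rr1[of z k \<omega>] by (intro mult_left_mono) auto
  also have "\<dots> = qq z k \<omega>" using rrsq[of z k \<omega>] by (simp add: power2_eq_square)
  finally show ?thesis by simp
qed

lemma cd1_zero:
  assumes Hz: "H z = z"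
  shows "AE \<omega> in M. real_cond_exp M (F k) (d1 z k) \<omega> = 0"
proof -
  interpret sigma_finite_subalgebra M "F k" by (rule sfs)
  interpret prob_space M by (rule P)
  define c where "c i \<omega> = \<alpha> k * (yv k \<omega> - z) $ i / qq z k \<omega>" for i \<omega>
  have m1: "yv k \<in> borel_measurable (F k)" "qq z k \<in> borel_measurable (F k)" by (rule measF)+
  have m2: "(\<lambda>\<omega>. (yv k \<omega> - z) $ i) \<in> borel_measurable (F k)" for i
    using m1(1) by measurable
  have cF: "c i \<in> borel_measurable (F k)" for i unfolding c_def[abs_def]
    using m1(2) m2[of i] by measurable
  have cb: "\<bar>c i \<omega>\<bar> \<le> \<alpha> k * LL" for i \<omega>
  proof -
    have q: "qq z k \<omega> \<ge> 1" by (rule qq1)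
    have "\<bar>(yv k \<omega> - z) $ i\<bar> \<le> norm (yv k \<omega> - z)" by (rule component_le_norm_cart)
    also have "\<dots> \<le> LL * norm (x k \<omega> - z)" by (rule y_bound[OF Hz])
    also have "\<dots> \<le> LL * qq z k \<omega>"
      using s_le_rr[of k \<omega> z] rr_le_qq[of z k \<omega>] LL1 by (intro mult_left_mono) auto
    finally have "\<bar>(yv k \<omega> - z) $ i\<bar> / qq z k \<omega> \<le> LL" using q by (simp add: divide_le_eq)
    then show ?thesis using apos[of k] q
      by (simp add: c_def abs_mult abs_div mult_left_mono mult.assoc times_divide_eq_right[symmetric] del: times_divide_eq_right)
  qed
  have cint: "integrable M (\<lambda>\<omega>. c i \<omega> * w k \<omega> $ i)" for i
  proof (rule Bochner_Integration.integrable_bound[of _ "\<lambda>\<omega>. (\<alpha> k * LL) * w k \<omega> $ i"])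
    show "integrable M (\<lambda>\<omega>. (\<alpha> k * LL) * w k \<omega> $ i)" using w_comp_int by auto
    show "(\<lambda>\<omega>. c i \<omega> * w k \<omega> $ i) \<in> borel_measurable M"
      using measF_M[OF cF] by measurable
    show "AE \<omega> in M. norm (c i \<omega> * w k \<omega> $ i) \<le> norm ((\<alpha> k * LL) * w k \<omega> $ i)"
      using cb apos[of k] LL1 by (auto intro!: AE_I2 simp: abs_mult mult_right_mono)
  qed
  have d1eq: "d1 z k = (\<lambda>\<omega>. \<Sum>i\<in>UNIV. c i \<omega> * w k \<omega> $ i)"
    by (rule ext) (simp add: d1_def c_def Wv_def inner_vec_def sum_divide_distrib sum_distrib_left algebra_simps)
  have "AE \<omega> in M. real_cond_exp M (F k) (\<lambda>\<omega>. \<Sum>i\<in>UNIV. c i \<omega> * w k \<omega> $ i) \<omega>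
      = (\<Sum>i\<in>UNIV. real_cond_exp M (F k) (\<lambda>\<omega>. c i \<omega> * w k \<omega> $ i) \<omega>)"
    by (rule real_cond_exp_sum) (rule cint)
  moreover have "AE \<omega> in M. \<forall>i\<in>UNIV. real_cond_exp M (F k) (\<lambda>\<omega>. c i \<omega> * w k \<omega> $ i) \<omega> = c i \<omega> * real_cond_exp M (F k) (\<lambda>\<omega>. w k \<omega> $ i) \<omega>"
    by (intro AE_finite_allI real_cond_exp_mult cF cint) auto
  moreover have "AE \<omega> in M. \<forall>i\<in>UNIV. real_cond_exp M (F k) (\<lambda>\<omega>. w k \<omega> $ i) \<omega> = 0"
    by (intro AE_finite_allI mart) auto
  ultimately show ?thesis unfolding d1eq by eventually_elim simp
qed


definition cd where "cd z k = real_cond_exp M (F k) (dd z k)"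
definition ff where "ff z k \<omega> = dd z k \<omega> - cd z k \<omega>"

lemma dd_int: "H z = z \<Longrightarrow> integrable M (dd z k)"
proof -
  assume Hz: "H z = z"
  interpret prob_space M by (rule P)
  show ?thesis by (rule integrable_const_bound[where B=LL]) (use dd_le[OF Hz] in auto)
qed

lemma d1_int: "H z = z \<Longrightarrow> integrable M (d1 z k)"
proof -
  assume Hz: "H z = z"
  show ?thesis
  proof (rule Bochner_Integration.integrable_bound[of _ "\<lambda>\<omega>. (LL * \<alpha> k) * norm (w k \<omega>)"])
    show "integrable M (\<lambda>\<omega>. (LL * \<alpha> k) * norm (w k \<omega>))" using w_norm_int by auto
    show "AE \<omega> in M. norm (d1 z k \<omega>) \<le> norm ((LL * \<alpha> k) * norm (w k \<omega>))"
      using d1_bound[OF Hz] apos[of k] LL1 by (auto intro!: AE_I2 simp: abs_mult)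
  qed measurable
qed

lemma hd_int: "H z = z \<Longrightarrow> integrable M (hd z k)"
proof -
  assume Hz: "H z = z"
  have "hd z k = (\<lambda>\<omega>. d1 z k \<omega> - dd z k \<omega>)" by (rule ext) (simp add: dd_split)
  then show ?thesis using d1_int[OF Hz] dd_int[OF Hz] by simp
qed

lemma cd_hd: "H z = z \<Longrightarrow> AE \<omega> in M. cd z k \<omega> = - real_cond_exp M (F k) (hd z k) \<omega>"
proof -
  assume Hz: "H z = z"
  interpret sigma_finite_subalgebra M "F k" by (rule sfs)
  have eq: "dd z k = (\<lambda>\<omega>. d1 z k \<omega> - hd z k \<omega>)" by (rule ext) (simp add: dd_split)
  have "AE \<omega> in M. real_cond_exp M (F k) (\<lambda>\<omega>. d1 z k \<omega> - hd z k \<omega>) \<omega>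
      = real_cond_exp M (F k) (d1 z k) \<omega> - real_cond_exp M (F k) (hd z k) \<omega>"
    by (rule real_cond_exp_diff[OF d1_int[OF Hz] hd_int[OF Hz]])
  with cd1_zero[OF Hz, of k] show ?thesis unfolding cd_def eq by eventually_elim simp
qed

lemma cd_int: "H z = z \<Longrightarrow> (\<integral>\<^sup>+\<omega>. ennreal \<bar>cd z k \<omega>\<bar> \<partial>M) \<le> ennreal (LL * (\<alpha> k powr p * CC z))"
proof -
  assume Hz: "H z = z"
  interpret sigma_finite_subalgebra M "F k" by (rule sfs)
  have hm: "hd z k \<in> borel_measurable M" by measurable
  have "AE \<omega> in M. ennreal \<bar>cd z k \<omega>\<bar> \<le> nn_cond_exp M (F k) (\<lambda>\<omega>. ennreal \<bar>hd z k \<omega>\<bar>) \<omega>"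
    using cd_hd[OF Hz, of k] real_cond_exp_abs[OF hm] by eventually_elim simp
  then have "(\<integral>\<^sup>+\<omega>. ennreal \<bar>cd z k \<omega>\<bar> \<partial>M) \<le> (\<integral>\<^sup>+\<omega>. nn_cond_exp M (F k) (\<lambda>\<omega>. ennreal \<bar>hd z k \<omega>\<bar>) \<omega> \<partial>M)"
    by (rule nn_integral_mono_AE)
  also have "\<dots> = (\<integral>\<^sup>+\<omega>. 1 * nn_cond_exp M (F k) (\<lambda>\<omega>. ennreal \<bar>hd z k \<omega>\<bar>) \<omega> \<partial>M)" by simp
  also have "\<dots> = (\<integral>\<^sup>+\<omega>. 1 * ennreal \<bar>hd z k \<omega>\<bar> \<partial>M)"
    by (rule nn_cond_exp_intg) (auto simp: hm)
  also have "\<dots> \<le> (\<integral>\<^sup>+\<omega>. ennreal LL * ennreal (th z k \<omega>) \<partial>M)"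
    using hd_bound[OF Hz] LL1 by (intro nn_integral_mono) (auto simp: ennreal_mult[symmetric] th0)
  also have "\<dots> = ennreal LL * (\<integral>\<^sup>+\<omega>. ennreal (th z k \<omega>) \<partial>M)"
    by (rule nn_integral_cmult) measurable
  also have "\<dots> \<le> ennreal LL * ennreal (\<alpha> k powr p * CC z)"
    by (intro mult_left_mono th_int[OF Hz]) auto
  also have "\<dots> = ennreal (LL * (\<alpha> k powr p * CC z))" using LL1 CC0 by (simp add: ennreal_mult)
  finally show ?thesis .
qed

lemma cd_le: "H z = z \<Longrightarrow> AE \<omega> in M. \<bar>cd z k \<omega>\<bar> \<le> LL"
proof -
  assume Hz: "H z = z"
  interpret sigma_finite_subalgebra M "F k" by (rule sfs)
  have "AE \<omega> in M. cd z k \<omega> \<le> LL" unfolding cd_def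
    by (rule real_cond_exp_le_c[OF dd_int[OF Hz]]) (use dd_le[OF Hz] in \<open>auto intro!: AE_I2 simp: abs_le_iff\<close>)
  moreover have "AE \<omega> in M. cd z k \<omega> \<ge> -LL" unfolding cd_def
  proof (rule real_cond_exp_ge_c[OF dd_int[OF Hz]])
    show "AE \<omega> in M. - LL \<le> dd z k \<omega>"
    proof (rule AE_I2)
      fix \<omega> show "- LL \<le> dd z k \<omega>" using dd_le[OF Hz, of k \<omega>] by linarith
    qed
  qed
  ultimately show ?thesis by eventually_elim auto
qed

lemma cd_summable: "H z = z \<Longrightarrow> AE \<omega> in M. summable (\<lambda>k. \<bar>cd z k \<omega>\<bar>)"
proof -
  assume Hz: "H z = z"
  show ?thesis
  proof (rule AE_summable_nn)
    show "(\<lambda>\<omega>. \<bar>cd z k \<omega>\<bar>) \<in> borel_measurable M" for k unfolding cd_def by measurable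
    have "(\<Sum>k. \<integral>\<^sup>+\<omega>. ennreal \<bar>cd z k \<omega>\<bar> \<partial>M) \<le> (\<Sum>k. ennreal (LL * (\<alpha> k powr p * CC z)))"
      by (intro suminf_le cd_int[OF Hz]) auto
    moreover have "(\<Sum>k. ennreal (LL * (\<alpha> k powr p * CC z))) \<noteq> \<top>"
      by (rule ennreal_suminf_neq_top) (use psum CC0 LL1 in \<open>auto intro: summable_mult2 summable_mult\<close>)
    ultimately show "(\<Sum>k. \<integral>\<^sup>+\<omega>. ennreal \<bar>cd z k \<omega>\<bar> \<partial>M) \<noteq> \<top>" by (auto simp: top_unique)
  qed simp
qed


lemma ennreal_lin: "0 \<le> a \<Longrightarrow> 0 \<le> b \<Longrightarrow> 0 \<le> c \<Longrightarrow> 0 \<le> d \<Longrightarrow>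
    ennreal a * ennreal b + ennreal c * ennreal d = ennreal (a * b + c * d)"
  by (simp add: ennreal_mult ennreal_plus)

lemma cd_measF: "cd z k \<in> borel_measurable (F k)" unfolding cd_def by (rule borel_measurable_cond_exp)

lemma ff_measF: "j < k \<Longrightarrow> ff z j \<in> borel_measurable (F k)"
proof -
  assume jk: "j < k"
  have [measurable]: "dd z j \<in> borel_measurable (F k)" by (rule measF_mono[OF measF(8)]) (use jk in simp)
  have [measurable]: "cd z j \<in> borel_measurable (F k)" by (rule measF_mono[OF cd_measF]) (use jk in simp)
  show ?thesis unfolding ff_def[abs_def] by measurable
qed

lemma ff_meas[measurable]: "ff z k \<in> borel_measurable M"
  unfolding ff_def[abs_def] cd_def by measurable

lemma ff_le: "H z = z \<Longrightarrow> AE \<omega> in M. \<bar>ff z k \<omega>\<bar> \<le> 2 * LL"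
proof -
  assume Hz: "H z = z"
  show ?thesis using cd_le[OF Hz, of k]
  proof eventually_elim
    case (elim \<omega>) then show ?case using dd_le[OF Hz, of k \<omega>] unfolding ff_def by linarith
  qed
qed

lemma ff_sq_int: "H z = z \<Longrightarrow> integrable M (\<lambda>\<omega>. (ff z k \<omega>)\<^sup>2)"
proof -
  assume Hz: "H z = z"
  interpret prob_space M by (rule P)
  show ?thesis
  proof (rule integrable_const_bound[where B="(2*LL)\<^sup>2"])
    show "AE \<omega> in M. norm ((ff z k \<omega>)\<^sup>2) \<le> (2*LL)\<^sup>2" using ff_le[OF Hz, of k]
    proof eventually_elim
      case (elim \<omega>)
      have "\<bar>ff z k \<omega>\<bar>\<^sup>2 \<le> (2*LL)\<^sup>2" using elim by (intro power_mono) auto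
      then show ?case by simp
    qed
  qed measurable
qed

lemma ff_orth:
  assumes Hz: "H z = z" and gF: "g \<in> borel_measurable (F k)" and gb: "\<And>\<omega>. \<omega> \<in> space M \<Longrightarrow> \<bar>g \<omega>\<bar> \<le> Bd"
  shows "(\<integral>\<omega>. g \<omega> * ff z k \<omega> \<partial>M) = 0"
proof -
  interpret sigma_finite_subalgebra M "F k" by (rule sfs)
  interpret prob_space M by (rule P)
  have gM[measurable]: "g \<in> borel_measurable M" by (rule measF_M[OF gF])
  have i1: "integrable M (\<lambda>\<omega>. g \<omega> * dd z k \<omega>)"
  proof (rule integrable_const_bound[where B="Bd * LL"])
    show "AE \<omega> in M. norm (g \<omega> * dd z k \<omega>) \<le> Bd * LL"
    proof (rule AE_I2)
      fix \<omega> assume \<omega>: "\<omega> \<in> space M"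
      have "\<bar>g \<omega>\<bar> * \<bar>dd z k \<omega>\<bar> \<le> Bd * LL"
        using gb[OF \<omega>] dd_le[OF Hz, of k \<omega>] by (intro mult_mono) auto
      then show "norm (g \<omega> * dd z k \<omega>) \<le> Bd * LL" by (simp add: abs_mult)
    qed
  qed measurable
  have i2: "integrable M (\<lambda>\<omega>. g \<omega> * cd z k \<omega>)"
    unfolding cd_def by (rule real_cond_exp_intg(1)[OF i1 gF]) measurable
  have e: "(\<integral>\<omega>. g \<omega> * cd z k \<omega> \<partial>M) = (\<integral>\<omega>. g \<omega> * dd z k \<omega> \<partial>M)"
    unfolding cd_def by (rule real_cond_exp_intg(2)[OF i1 gF]) measurable
  have "(\<integral>\<omega>. g \<omega> * ff z k \<omega> \<partial>M) = (\<integral>\<omega>. g \<omega> * dd z k \<omega> - g \<omega> * cd z k \<omega> \<partial>M)"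
    by (simp add: ff_def algebra_simps)
  also have "\<dots> = (\<integral>\<omega>. g \<omega> * dd z k \<omega> \<partial>M) - (\<integral>\<omega>. g \<omega> * cd z k \<omega> \<partial>M)"
    by (rule Bochner_Integration.integral_diff[OF i1 i2])
  finally show ?thesis using e by simp
qed

lemma ff_sq_bound: "H z = z \<Longrightarrow> (\<integral>\<omega>. (ff z k \<omega>)\<^sup>2 \<partial>M) \<le> 4 * LL\<^sup>2 * CC z * \<alpha> k powr p"
proof -
  assume Hz: "H z = z"
  interpret prob_space M by (rule P)
  have cdm[measurable]: "cd z k \<in> borel_measurable M" by (rule measF_M[OF cd_measF])
  have pt: "AE \<omega> in M. ennreal ((ff z k \<omega>)\<^sup>2) \<le> ennreal (2 * LL\<^sup>2) * ennreal (th z k \<omega>) + ennreal (2 * LL) * ennreal \<bar>cd z k \<omega>\<bar>"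
    using cd_le[OF Hz, of k]
  proof eventually_elim
    case (elim \<omega>)
    have a: "(ff z k \<omega>)\<^sup>2 \<le> 2 * (dd z k \<omega>)\<^sup>2 + 2 * (cd z k \<omega>)\<^sup>2"
    proof -
      have "(dd z k \<omega> - cd z k \<omega>)\<^sup>2 = 2 * (dd z k \<omega>)\<^sup>2 + 2 * (cd z k \<omega>)\<^sup>2 - (dd z k \<omega> + cd z k \<omega>)\<^sup>2"
        by (simp add: power2_eq_square algebra_simps)
      moreover have "0 \<le> (dd z k \<omega> + cd z k \<omega>)\<^sup>2" by simp
      ultimately show ?thesis unfolding ff_def by linarith
    qed
    have b: "(dd z k \<omega>)\<^sup>2 \<le> LL\<^sup>2 * th z k \<omega>" by (rule dd_sq[OF Hz])
    have c: "(cd z k \<omega>)\<^sup>2 \<le> LL * \<bar>cd z k \<omega>\<bar>"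
    proof -
      have "\<bar>cd z k \<omega>\<bar> * \<bar>cd z k \<omega>\<bar> \<le> LL * \<bar>cd z k \<omega>\<bar>" using elim by (intro mult_right_mono) auto
      then show ?thesis by (simp add: power2_eq_square abs_mult_self_eq)
    qed
    have "(ff z k \<omega>)\<^sup>2 \<le> 2 * LL\<^sup>2 * th z k \<omega> + 2 * LL * \<bar>cd z k \<omega>\<bar>" using a b c by linarith
    then have "ennreal ((ff z k \<omega>)\<^sup>2) \<le> ennreal (2 * LL\<^sup>2 * th z k \<omega> + 2 * LL * \<bar>cd z k \<omega>\<bar>)"
      by (rule ennreal_leI)
    also have "\<dots> = ennreal (2 * LL\<^sup>2) * ennreal (th z k \<omega>) + ennreal (2 * LL) * ennreal \<bar>cd z k \<omega>\<bar>"
      using ennreal_lin[of "2 * LL\<^sup>2" "th z k \<omega>" "2 * LL" "\<bar>cd z k \<omega>\<bar>"] LL1 th0[of z k \<omega>] by simp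
    finally show ?case .
  qed
  have "(\<integral>\<^sup>+\<omega>. ennreal ((ff z k \<omega>)\<^sup>2) \<partial>M) \<le> (\<integral>\<^sup>+\<omega>. ennreal (2 * LL\<^sup>2) * ennreal (th z k \<omega>) + ennreal (2 * LL) * ennreal \<bar>cd z k \<omega>\<bar> \<partial>M)"
    by (rule nn_integral_mono_AE[OF pt])
  also have "\<dots> = ennreal (2 * LL\<^sup>2) * (\<integral>\<^sup>+\<omega>. ennreal (th z k \<omega>) \<partial>M) + ennreal (2 * LL) * (\<integral>\<^sup>+\<omega>. ennreal \<bar>cd z k \<omega>\<bar> \<partial>M)"
    by (simp add: nn_integral_add nn_integral_cmult)
  also have "\<dots> \<le> ennreal (2 * LL\<^sup>2) * ennreal (\<alpha> k powr p * CC z) + ennreal (2 * LL) * ennreal (LL * (\<alpha> k powr p * CC z))"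
    by (intro add_mono mult_left_mono th_int[OF Hz] cd_int[OF Hz]) auto
  also have "\<dots> = ennreal (4 * LL\<^sup>2 * CC z * \<alpha> k powr p)"
  proof -
    have e: "4 * LL\<^sup>2 * CC z * \<alpha> k powr p = 2 * LL\<^sup>2 * (\<alpha> k powr p * CC z) + 2 * LL * (LL * (\<alpha> k powr p * CC z))"
      by (simp add: power2_eq_square algebra_simps)
    show ?thesis unfolding e
      by (rule ennreal_lin) (use LL1 CC0 in auto)
  qed
  finally have nn: "(\<integral>\<^sup>+\<omega>. ennreal ((ff z k \<omega>)\<^sup>2) \<partial>M) \<le> ennreal (4 * LL\<^sup>2 * CC z * \<alpha> k powr p)" .
  have "(\<integral>\<omega>. (ff z k \<omega>)\<^sup>2 \<partial>M) = enn2real (\<integral>\<^sup>+\<omega>. ennreal ((ff z k \<omega>)\<^sup>2) \<partial>M)"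
    by (rule integral_eq_nn_integral) auto
  also have "\<dots> \<le> 4 * LL\<^sup>2 * CC z * \<alpha> k powr p"
    by (rule enn2real_leI[OF _ nn]) (use CC0 in simp)
  finally show ?thesis .
qed

lemma ff_sum: "H z = z \<Longrightarrow> summable (\<lambda>k. \<integral>\<omega>. (ff z k \<omega>)\<^sup>2 \<partial>M)"
proof -
  assume Hz: "H z = z"
  show ?thesis
  proof (rule summable_comparison_test[OF _ summable_mult[OF psum, of "4 * LL\<^sup>2 * CC z"]])
    show "\<exists>N. \<forall>n\<ge>N. norm (\<integral>\<omega>. (ff z n \<omega>)\<^sup>2 \<partial>M) \<le> 4 * LL\<^sup>2 * CC z * \<alpha> n powr p"
      using ff_sq_bound[OF Hz] by simp
  qed
qed

lemma dd_conv: "H z = z \<Longrightarrow> AE \<omega> in M. convergent (\<lambda>n. \<Sum>k<n. dd z k \<omega>)"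
proof -
  assume Hz: "H z = z"
  have "AE \<omega> in M. convergent (\<lambda>n. \<Sum>k<n. ff z k \<omega>)"
    by (rule mg_conv[OF P subF ff_measF ff_meas ff_sq_int[OF Hz] ff_orth[OF Hz] ff_sum[OF Hz]])
  then show ?thesis using cd_summable[OF Hz]
  proof eventually_elim
    case (elim \<omega>)
    have "summable (\<lambda>k. cd z k \<omega>)" using elim(2) by (rule summable_rabs_cancel)
    then have "convergent (\<lambda>n. \<Sum>k<n. cd z k \<omega>)" by (simp add: summable_iff_convergent)
    then have "convergent (\<lambda>n. (\<Sum>k<n. ff z k \<omega>) + (\<Sum>k<n. cd z k \<omega>))" using elim(1) by (intro convergent_add)
    then show ?case by (simp add: ff_def sum.distrib[symmetric])
  qed
qed

lemma alpha_lim: "\<alpha> \<longlonglongrightarrow> 0"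
proof -
  have "(\<lambda>k. \<alpha> k powr p) \<longlonglongrightarrow> 0" by (rule summable_LIMSEQ_zero[OF psum])
  then have "(\<lambda>k. (\<alpha> k powr p) powr (1/p)) \<longlonglongrightarrow> 0"
    by (rule tendsto_zero_powrI) (use p1 in auto)
  moreover have "(\<alpha> k powr p) powr (1/p) = \<alpha> k" for k using p1 apos[of k] by (simp add: powr_powr)
  ultimately show ?thesis by simp
qed

lemma z_conv:
  assumes Hz: "H z = z"
  shows "AE \<omega> in M. convergent (\<lambda>k. norm (x k \<omega> - z)) \<and> summable (\<lambda>k. \<alpha> k * (norm (x k \<omega> - H (x k \<omega>)))\<^sup>2)"
  using th_summable[OF Hz] dd_conv[OF Hz] AE_space
proof eventually_elim
  case (elim \<omega>)
  have step: "x (Suc k) \<omega> = x k \<omega> + \<alpha> k *\<^sub>R (H (x k \<omega>) - x k \<omega>) + Wv k \<omega>" for k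
    using iter[OF elim(3), of k] by (simp add: Wv_def scaleR_add_right)
  have Hne: "norm (H (x k \<omega>) - z) \<le> norm (x k \<omega> - z)" for k using nonexp[of "x k \<omega>" z] Hz by simp
  have L: "1 + 2 * \<alpha> k \<le> LL" for k using alpha_le[of k] by (simp add: LL_def)
  have th': "summable (\<lambda>k. (norm (Wv k \<omega>) / sqrt (1 + (norm (x k \<omega> - z))\<^sup>2)) powr p)"
    using elim(1) by (simp add: th_def rr_def qq_def)
  have dd': "convergent (\<lambda>n. \<Sum>k<n. inner (x k \<omega> + \<alpha> k *\<^sub>R (H (x k \<omega>) - x k \<omega>) - z)
          (if norm (Wv k \<omega>) \<le> sqrt (1 + (norm (x k \<omega> - z))\<^sup>2) then Wv k \<omega> else 0) / (1 + (norm (x k \<omega> - z))\<^sup>2))"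
    using elim(2) by (simp add: dd_def yv_def ev_def rr_def qq_def)
  note pw = pathwise[where xs="\<lambda>k. x k \<omega>" and Ws="\<lambda>k. Wv k \<omega>" and H=H and z=z and \<alpha>=\<alpha> and p=p and L=LL,
      OF Hne apos L alpha_lim p1 p2 step th' dd']
  show ?case using pw by simp
qed


lemma main: "AE \<omega> in M. \<exists>y. H y = y \<and> (\<lambda>k. x k \<omega>) \<longlonglongrightarrow> y"
proof -
  obtain D0 :: "(real^'d) set" where D0: "countable D0" "\<And>X. open X \<Longrightarrow> X \<noteq> {} \<Longrightarrow> \<exists>d\<in>D0. d \<in> X"
    by (rule countable_dense_setE) blast
  define ok where "ok d n = (\<exists>y. H y = y \<and> dist y d < 1 / real (Suc n))" for d n
  define pick where "pick d n = (SOME y. H y = y \<and> dist y d < 1 / real (Suc n))" for d n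
  define Z where "Z = insert xbar ((\<lambda>(d, n). pick d n) ` ((D0 \<times> (UNIV :: nat set)) \<inter> {(d, n). ok d n}))"
  have pick: "ok d n \<Longrightarrow> H (pick d n) = pick d n \<and> dist (pick d n) d < 1 / real (Suc n)" for d n
    unfolding ok_def pick_def by (rule someI_ex)
  have Zc: "countable Z"
  proof -
    have "countable (D0 \<times> (UNIV::nat set))" using D0(1) by (intro countable_SIGMA) auto
    then have "countable ((D0 \<times> (UNIV::nat set)) \<inter> {(d, n). ok d n})"
      by (rule countable_subset[rotated]) (rule Int_lower1)
    then show ?thesis unfolding Z_def by simp
  qed
  have Zfix: "H z = z" if "z \<in> Z" for z
  proof -
    from that consider "z = xbar" | d n where "ok d n" "z = pick d n"
      unfolding Z_def by (auto simp: image_iff)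
    then show ?thesis
    proof cases
      case 1 then show ?thesis using Hxbar by simp
    next
      case 2 then show ?thesis using pick[of d n] by simp
    qed
  qed
  have Zdense: "\<exists>z\<in>Z. dist z y < e" if y: "H y = y" and e: "0 < e" for y e
  proof -
    obtain n where "inverse (real (Suc n)) < e / 2" using reals_Archimedean[of "e/2"] e by auto
    then have n: "1 / real (Suc n) < e / 2" by (simp add: inverse_eq_divide)
    have "y \<in> ball y (1 / real (Suc n))" by simp
    then obtain d where d: "d \<in> D0" "d \<in> ball y (1 / real (Suc n))"
      using D0(2)[of "ball y (1 / real (Suc n))"] by blast
    then have dd: "dist y d < 1 / real (Suc n)" by simp
    then have okd: "ok d n" using y unfolding ok_def by blast
    have "pick d n \<in> Z" unfolding Z_def using d(1) okd by (auto intro!: image_eqI[of _ _ "(d, n)"])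
    moreover have "dist (pick d n) y < e"
    proof -
      have "dist (pick d n) y \<le> dist (pick d n) d + dist d y" by (rule dist_triangle)
      also have "\<dots> < 1 / real (Suc n) + 1 / real (Suc n)" using pick[OF okd] dd by (simp add: dist_commute)
      also have "\<dots> < e" using n by simp
      finally show ?thesis .
    qed
    ultimately show ?thesis by blast
  qed
  have "AE \<omega> in M. \<forall>z\<in>Z. convergent (\<lambda>k. norm (x k \<omega> - z)) \<and> summable (\<lambda>k. \<alpha> k * (norm (x k \<omega> - H (x k \<omega>)))\<^sup>2)"
    by (rule AE_ball_countable'[OF _ Zc]) (rule z_conv[OF Zfix])
  then show ?thesis
  proof eventually_elim
    case (elim \<omega>)
    have xz: "xbar \<in> Z" by (simp add: Z_def)
    show ?case
    proof (rule final_det[where xs="\<lambda>k. x k \<omega>" and H=H and Z=Z and \<alpha>=\<alpha>])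
      show "continuous_on UNIV H" by (rule Hcont)
      show "H z = z" if "z \<in> Z" for z using Zfix that .
      show "\<exists>z\<in>Z. dist z y < e" if "H y = y" "0 < e" for y e using Zdense that by blast
      show "xbar \<in> Z" by (rule xz)
      show "convergent (\<lambda>k. dist (x k \<omega>) z)" if "z \<in> Z" for z using elim that by (simp add: dist_norm)
      show "summable (\<lambda>k. \<alpha> k * (dist (x k \<omega>) (H (x k \<omega>)))\<^sup>2)" using elim xz by (simp add: dist_norm)
      show "0 < \<alpha> k" for k by (rule apos)
      show "\<not> summable \<alpha>" by (rule nsum)
    qed
  qed
qed

end

theorem theorem3:
  fixes M :: "'a measure"
    and H :: "real^'d \<Rightarrow> real^'d"
    and x w :: "nat \<Rightarrow> 'a \<Rightarrow> real^'d"
    and \<alpha> :: "nat \<Rightarrow> real"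
    and p A B :: real
    and xbar :: "real^'d"
  assumes "prob_space M"
    and "1 < p" and "p \<le> 2"
    and nonexp: "\<And>u v. norm (H u - H v) \<le> norm (u - v)"
    and "{z. H z = z} \<noteq> {}" and "bounded {z. H z = z}"
    and x0_meas: "x 0 \<in> borel_measurable M"
    and w_int: "\<And>k. integrable M (w k)"
    and iter: "\<And>k \<omega>. \<omega> \<in> space M \<Longrightarrow>
                 x (Suc k) \<omega> = x k \<omega> + \<alpha> k *\<^sub>R (H (x k \<omega>) - x k \<omega> + w k \<omega>)"
    and mart: "\<And>k i. AE \<omega> in M.
                 real_cond_exp M (nat_filtration M x k) (\<lambda>\<eta>. w k \<eta> $ i) \<omega> = 0"
    and "H xbar = xbar" and "A > 0" and "B \<ge> 0"
    and moment: "\<And>k. AE \<omega> in M.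
                 nn_cond_exp M (nat_filtration M x k) (\<lambda>\<eta>. ennreal (norm (w k \<eta>) powr p)) \<omega>
                   \<le> ennreal (A + B * norm (x k \<omega> - xbar) powr p)"
    and "\<And>k. \<alpha> k > 0" and "decseq \<alpha>"
    and "\<not> summable \<alpha>"
    and "summable (\<lambda>k. \<alpha> k powr p)"
  shows "AE \<omega> in M. \<exists>z. H z = z \<and> (\<lambda>k. x k \<omega>) \<longlonglongrightarrow> z"
proof -
  interpret sa M H x w \<alpha> p A B xbar
    by (rule sa.intro) (fact assms)+
  show ?thesis by (rule main)
qed


end
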